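(* Let $\lambda\in(\frac16,\frac56)$, let $(\beta_0,\beta_1,\beta_2,\beta_3)$ be a probability vector, and let $x\in[0,1]$ satisfy $\lim_{n\to\infty}\beta_i(x,n)/n=\beta_i$ for $i=0,1,2,3$. (i) If $\beta_1\log(6\lambda+1)+\beta_2\log(6\lambda-1)>0$, then $x\in\mathcal I$. (ii) If $\beta_1\log(6\lambda+1)+\beta_2\log(6\lambda-1)\le0$, then $h_{F^\lambda}(x)=1$.
   Context: Construction: $F^\lambda_0\equiv0$ on $[0,1]$. Given $F^\lambda_n$ with its $4^n$ closed intervals of generation $n$ (covering $[0,1]$, disjoint interiors, $F^\lambda_n$ affine on each), on each interval $[a,b]$ of generation $n$, with $\ell=b-a$ and slope $m$, $F^\lambda_{n+1}$ coincides with $F^\lambda_n$ at $a,a+\ell/3,a+2\ell/3,b$, equals $F^\lambda_n(a+\ell/2)+\lambda\ell\sqrt{1+m^2}$ at $a+\ell/2$, and is affine on $[a,a+\ell/3],[a+\ell/3,a+\ell/2],[a+\ell/2,a+2\ell/3],[a+2\ell/3,b]$. $F^\lambda=\lim_nF^\lambda_n$. Pointwise exponent: $f\in\mathcal C^\alpha(x_0)$ if there exist a polynomial $P$ of degree at most $\lfloor\alpha\rfloor$ and $C,\delta>0$ with $|f(x)-P(x-x_0)|\le C|x-x_0|^\alpha$ whenever $|x-x_0|<\delta$; $h_f(x_0)=\sup\{\alpha\ge0:f\in\mathcal C^\alpha(x_0)\}$. Dynamics: $T(x)=3x$ on $[0,\frac13)$, $6x-2$ on $[\frac13,\frac12)$,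 $4-6x$ on $[\frac12,\frac23)$, $3x-2$ on $[\frac23,1]$; $U(x)=0,1,2,3$ on these intervals; $u_n(x)=U(T^nx)$; $\beta_i(x,n)=\#\{k<n:u_k(x)=i\}$. $\mathcal E$ is the set of $x$ whose digit sequence is eventually constantly $0$ or eventually constantly $3$; for $x\notin\mathcal E$, $m_n(x)$ is the slope of $F^\lambda_n$ at $x$; $\mathcal I$ is the set of $x\in[0,1]\setminus\mathcal E$ with $|m_n(x)|\to+\infty$. *)

theory Defs
  imports "HOL-Analysis.Analysis" "HOL-Computational_Algebra.Polynomial"
begin

definition split4 :: "real \<times> real \<Rightarrow> (real \<times> real) list" where
  "split4 I = (let a = fst I; b = snd I; l = b - a in
     [(a, a + l/3), (a + l/3, a + l/2), (a + l/2, a + 2*l/3), (a + 2*l/3, b)])"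

fun gen :: "nat \<Rightarrow> (real \<times> real) list" where
  "gen 0 = [(0, 1)]"
| "gen (Suc n) = concat (map split4 (gen n))"

definition hat :: "real \<Rightarrow> real \<Rightarrow> real \<Rightarrow> real" where
  "hat a b x = (let l = b - a in
     if a + l/3 \<le> x \<and> x \<le> a + l/2 then (x - (a + l/3)) / (l/6)
     else if a + l/2 < x \<and> x \<le> a + 2*l/3 then ((a + 2*l/3) - x) / (l/6)
     else 0)"

fun Fn :: "real \<Rightarrow> nat \<Rightarrow> real \<Rightarrow> real" where
  "Fn lam 0 x = 0"
| "Fn lam (Suc n) x = Fn lam n x +
     sum_list (map (\<lambda>(a, b). lam * (b - a) *
        sqrt (1 + ((Fn lam n b - Fn lam n a) / (b - a))\<^sup>2) * hat a b x) (gen n))"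

definition Flim :: "real \<Rightarrow> real \<Rightarrow> real" where
  "Flim lam x = lim (\<lambda>n. Fn lam n x)"

definition pw_hoelder :: "real set \<Rightarrow> (real \<Rightarrow> real) \<Rightarrow> real \<Rightarrow> real \<Rightarrow> bool" where
  "pw_hoelder S f x0 \<alpha> \<longleftrightarrow>
     (\<exists>P :: real poly. degree P \<le> nat \<lfloor>\<alpha>\<rfloor> \<and>
        (\<exists>C \<delta>. \<delta> > 0 \<and> (\<forall>x\<in>S. \<bar>x - x0\<bar> < \<delta> \<longrightarrow>
            \<bar>f x - poly P (x - x0)\<bar> \<le> C * \<bar>x - x0\<bar> powr \<alpha>)))"

definition hoelder_exp :: "real set \<Rightarrow> (real \<Rightarrow> real) \<Rightarrow> real \<Rightarrow> ereal" where
  "hoelder_exp S f x0 = Sup (ereal ` {\<alpha>. \<alpha> \<ge> 0 \<and> pw_hoelder S f x0 \<alpha>})"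

definition T :: "real \<Rightarrow> real" where
  "T x = (if x < 1/3 then 3*x else if x < 1/2 then 6*x - 2
          else if x < 2/3 then 4 - 6*x else 3*x - 2)"

definition U :: "real \<Rightarrow> nat" where
  "U x = (if x < 1/3 then 0 else if x < 1/2 then 1 else if x < 2/3 then 2 else 3)"

definition udig :: "nat \<Rightarrow> real \<Rightarrow> nat" where
  "udig n x = U ((T ^^ n) x)"

definition betacount :: "nat \<Rightarrow> real \<Rightarrow> nat \<Rightarrow> nat" where
  "betacount i x n = card {k. k < n \<and> udig k x = i}"

definition Eset :: "real set" where
  "Eset = {x. (\<exists>N. \<forall>n\<ge>N. udig n x = 0) \<or> (\<exists>N. \<forall>n\<ge>N. udig n x = 3)}"

text \<open>Slope of F^lambda_n at x (for x not in E, x is interior to a generation-n interval).\<close>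
definition slope :: "real \<Rightarrow> nat \<Rightarrow> real \<Rightarrow> real" where
  "slope lam n x = deriv (Fn lam n) x"

definition Iset :: "real \<Rightarrow> real set" where
  "Iset lam = {x. x \<in> {0..1} - Eset \<and> filterlim (\<lambda>n. \<bar>slope lam n x\<bar>) at_top sequentially}"

end

theory Submission
  imports Defs
begin


fun chainfrom :: "real \<Rightarrow> (real \<times> real) list \<Rightarrow> real \<Rightarrow> bool" where
  "chainfrom s [] e = (s = e)"
| "chainfrom s (p # xs) e = (s = fst p \<and> fst p < snd p \<and> chainfrom (snd p) xs e)"

lemma chainfrom_append: "chainfrom s (xs @ ys) e \<longleftrightarrow> (\<exists>m. chainfrom s xs m \<and> chainfrom m ys e)"
  by (induction xs arbitrary: s) auto

lemma split4_eq: "split4 (a, b) = [(a, a + (b-a)/3), (a + (b-a)/3, a + (b-a)/2),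
      (a + (b-a)/2, a + 2*(b-a)/3), (a + 2*(b-a)/3, b)]"
  by (simp add: split4_def Let_def)

lemma split4_chain: "a < b \<Longrightarrow> chainfrom a (split4 (a,b)) b"
  by (simp add: split4_eq field_simps)

lemma chainfrom_concat: "chainfrom s xs e \<Longrightarrow> chainfrom s (concat (map split4 xs)) e"
proof (induction xs arbitrary: s)
  case Nil then show ?case by simp
next
  case (Cons p xs)
  obtain a b where p: "p = (a,b)" by force
  from Cons.prems p have "s = a" "a < b" "chainfrom b xs e" by auto
  then show ?case using Cons.IH split4_chain p by (auto simp: chainfrom_append)
qed

lemma gen_chain: "chainfrom 0 (gen n) 1"
  by (induction n) (auto intro: chainfrom_concat)

lemma chainfrom_le: "chainfrom s ys e \<Longrightarrow> s \<le> e"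
proof (induction ys arbitrary: s)
  case Nil then show ?case by simp
next
  case (Cons p ys)
  then have "s = fst p" "fst p < snd p" "chainfrom (snd p) ys e" by auto
  with Cons.IH[of "snd p"] show ?case by linarith
qed

lemma chainfrom_mem: "chainfrom s xs e \<Longrightarrow> p \<in> set xs \<Longrightarrow> s \<le> fst p \<and> fst p < snd p \<and> snd p \<le> e"
proof (induction xs arbitrary: s)
  case Nil then show ?case by simp
next
  case (Cons q xs)
  then have h: "s = fst q" "fst q < snd q" "chainfrom (snd q) xs e" by auto
  show ?case
  proof (cases "p = q")
    case True
    then show ?thesis using h chainfrom_le[OF h(3)] by simp
  next
    case False
    then have "p \<in> set xs" using Cons.prems by simp
    from Cons.IH[OF h(3) this] h show ?thesis by linarith
  qed
qed

lemma gen_mem: "J \<in> set (gen n) \<Longrightarrow> 0 \<le> fst J \<and> fst J < snd J \<and> snd J \<le> 1"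
  using chainfrom_mem[OF gen_chain] by blast

lemma sum_list_zero: "(\<And>y. y \<in> set xs \<Longrightarrow> f y = 0) \<Longrightarrow> sum_list (map f xs) = (0::real)"
  by (induction xs) auto

lemma chain_sum:
  assumes "chainfrom s xs e" "(a,b) \<in> set xs" "a \<le> x" "x \<le> b"
    and "\<And>a' b'. (a',b') \<in> set xs \<Longrightarrow> a' < b' \<Longrightarrow> x \<le> a' \<or> b' \<le> x \<Longrightarrow> f (a',b') = (0::real)"
  shows "sum_list (map f xs) = f (a,b)"
  using assms
proof (induction xs arbitrary: s)
  case Nil then show ?case by simp
next
  case (Cons q xs)
  obtain c d where q: "q = (c,d)" by force
  from Cons.prems q have ch: "c < d" "chainfrom d xs e" by auto
  have rest: "d \<le> fst p \<and> fst p < snd p" if "p \<in> set xs" for p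
    using chainfrom_mem[OF ch(2) that] by blast
  show ?case
  proof (cases "(a,b) = q")
    case True
    have "f p = 0" if p: "p \<in> set xs" for p
    proof -
      obtain a' b' where p': "p = (a',b')" by force
      have "d \<le> a'" "a' < b'" using rest[OF p] p' by auto
      moreover have "x \<le> d" using True q Cons.prems(4) by simp
      ultimately show ?thesis using Cons.prems(5)[of a' b'] p p' by auto
    qed
    then have "sum_list (map f xs) = 0" by (rule sum_list_zero)
    then show ?thesis using True by simp
  next
    case False
    then have ab: "(a,b) \<in> set xs" using Cons.prems by auto
    then have "d \<le> x" using rest[OF ab] Cons.prems(3) by simp
    then have "f q = 0" using Cons.prems(5)[of c d] q ch by auto
    moreover have "sum_list (map f xs) = f (a,b)"
      using Cons.IH[OF ch(2) ab Cons.prems(3,4)] Cons.prems(5) by auto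
    ultimately show ?thesis by simp
  qed
qed

lemma hat_out: "a < b \<Longrightarrow> x \<le> a \<or> b \<le> x \<Longrightarrow> hat a b x = 0"
  unfolding hat_def Let_def by (auto simp: field_simps)

lemma hat_pieces:
  assumes "a < b"
  shows "x \<in> {a..a+(b-a)/3} \<Longrightarrow> hat a b x = 0"
    and "x \<in> {a+(b-a)/3..a+(b-a)/2} \<Longrightarrow> hat a b x = (x - (a+(b-a)/3)) * 6/(b-a)"
    and "x \<in> {a+2*(b-a)/3..b} \<Longrightarrow> hat a b x = 0"
  using assms unfolding hat_def Let_def by (auto simp: field_simps)

lemma hat_piece3:
  assumes "a < b" "x \<in> {a+(b-a)/2..a+2*(b-a)/3}"
  shows "hat a b x = ((a+2*(b-a)/3) - x) * 6/(b-a)"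
proof (cases "x = a+(b-a)/2")
  case True
  have "hat a b x = 1" using True assms unfolding hat_def Let_def by (simp add: field_simps)
  moreover have "((a+2*(b-a)/3) - x) * 6/(b-a) = 1" using True assms by (simp add: field_simps)
  ultimately show ?thesis by simp
next
  case False
  then have "a+(b-a)/2 < x" using assms by auto
  then show ?thesis using assms unfolding hat_def Let_def by (auto simp: field_simps)
qed



definition mJ :: "real \<Rightarrow> nat \<Rightarrow> real \<times> real \<Rightarrow> real" where
  "mJ lam n J = (Fn lam n (snd J) - Fn lam n (fst J)) / (snd J - fst J)"

definition sig :: "real \<Rightarrow> nat \<Rightarrow> real \<times> real \<Rightarrow> real" where
  "sig lam n J = sqrt (1 + (mJ lam n J)\<^sup>2)"

lemma Fn_step:
  assumes "J \<in> set (gen n)" "fst J \<le> x" "x \<le> snd J"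
  shows "Fn lam (Suc n) x = Fn lam n x + lam * (snd J - fst J) * sig lam n J * hat (fst J) (snd J) x"
proof -
  obtain a b where J: "J = (a,b)" by force
  let ?f = "(\<lambda>(a, b). lam * (b - a) *
        sqrt (1 + ((Fn lam n b - Fn lam n a) / (b - a))\<^sup>2) * hat a b x)"
  have "sum_list (map ?f (gen n)) = ?f (a,b)"
    by (rule chain_sum[OF gen_chain]) (use assms J hat_out in auto)
  then show ?thesis by (simp add: J sig_def mJ_def)
qed

lemma split4_mem: "J \<in> set (split4 (a,b)) \<Longrightarrow> a < b \<Longrightarrow> a \<le> fst J \<and> snd J \<le> b \<and> fst J < snd J"
  by (auto simp: split4_eq field_simps)

lemma gen_Suc_mem: "J \<in> set (gen (Suc n)) \<Longrightarrow> \<exists>P\<in>set (gen n). J \<in> set (split4 P)"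
  by auto

lemma split4_gen: "P \<in> set (gen n) \<Longrightarrow> J \<in> set (split4 P) \<Longrightarrow> J \<in> set (gen (Suc n))"
  by auto

lemma hat_affine:
  assumes "J \<in> set (split4 (a,b))" "a < b"
  shows "\<exists>A B. \<forall>x\<in>{fst J..snd J}. hat a b x = A + B*x"
proof -
  have "J = (a, a + (b-a)/3) \<or> J = (a + (b-a)/3, a + (b-a)/2) \<or>
      J = (a + (b-a)/2, a + 2*(b-a)/3) \<or> J = (a + 2*(b-a)/3, b)"
    using assms(1) by (simp add: split4_eq)
  then show ?thesis
  proof (elim disjE)
    assume "J = (a, a + (b-a)/3)"
    then show ?thesis using hat_pieces(1)[OF assms(2)] by (intro exI[of _ 0]) auto
  next
    assume J: "J = (a + (b-a)/3, a + (b-a)/2)"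
    have "\<forall>x\<in>{a + (b-a)/3..a + (b-a)/2}. hat a b x = (-(a+(b-a)/3)*6/(b-a)) + (6/(b-a))*x"
    proof
      fix x assume "x \<in> {a + (b-a)/3..a + (b-a)/2}"
      then have "hat a b x = (x - (a+(b-a)/3)) * 6/(b-a)" using hat_pieces(2)[OF assms(2)] by blast
      also have "\<dots> = (-(a+(b-a)/3)*6/(b-a)) + (6/(b-a))*x" by (simp add: diff_divide_distrib add_divide_distrib algebra_simps)
      finally show "hat a b x = (-(a+(b-a)/3)*6/(b-a)) + (6/(b-a))*x" .
    qed
    then show ?thesis unfolding J fst_conv snd_conv by blast
  next
    assume J: "J = (a + (b-a)/2, a + 2*(b-a)/3)"
    have "\<forall>x\<in>{a + (b-a)/2..a + 2*(b-a)/3}. hat a b x = ((a+2*(b-a)/3)*6/(b-a)) + (-6/(b-a))*x"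
    proof
      fix x assume "x \<in> {a + (b-a)/2..a + 2*(b-a)/3}"
      then have "hat a b x = ((a+2*(b-a)/3) - x) * 6/(b-a)" using hat_piece3[OF assms(2)] by blast
      also have "\<dots> = ((a+2*(b-a)/3)*6/(b-a)) + (-6/(b-a))*x" by (simp add: diff_divide_distrib add_divide_distrib algebra_simps)
      finally show "hat a b x = ((a+2*(b-a)/3)*6/(b-a)) + (-6/(b-a))*x" .
    qed
    then show ?thesis unfolding J fst_conv snd_conv by blast
  next
    assume "J = (a + 2*(b-a)/3, b)"
    then show ?thesis using hat_pieces(3)[OF assms(2)] by (intro exI[of _ 0]) auto
  qed
qed

lemma affine_norm:
  fixes g :: "real \<Rightarrow> real"
  assumes "\<forall>x\<in>{c..d}. g x = A + B*x" "c < d" "x \<in> {c..d}"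
  shows "g x = g c + (g d - g c)/(d - c) * (x - c)"
proof -
  have "c \<in> {c..d}" "d \<in> {c..d}" using assms(2) by auto
  then have "g x = A + B*x" "g c = A + B*c" "g d = A + B*d" using assms(1,3) by auto
  then show ?thesis using assms(2) by (simp add: field_simps)
qed

lemma Fn_affine:
  "J \<in> set (gen n) \<Longrightarrow> x \<in> {fst J..snd J} \<Longrightarrow> Fn lam n x = Fn lam n (fst J) + mJ lam n J * (x - fst J)"
proof (induction n arbitrary: J x)
  case 0 then show ?case by (simp add: mJ_def)
next
  case (Suc n)
  obtain P where P: "P \<in> set (gen n)" "J \<in> set (split4 P)" using Suc.prems(1) by auto
  obtain a b where ab: "P = (a,b)" by force
  have ab2: "a < b" using gen_mem[OF P(1)] ab by simp
  have sub: "a \<le> fst J" "snd J \<le> b" "fst J < snd J" using split4_mem[OF P(2)[unfolded ab] ab2] by auto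
  obtain A B where AB: "\<forall>x\<in>{fst J..snd J}. hat a b x = A + B*x"
    using hat_affine[OF P(2)[unfolded ab] ab2] by blast
  let ?c = "lam * (b - a) * sig lam n P"
  let ?m = "mJ lam n P"
  have "\<forall>y\<in>{fst J..snd J}. Fn lam (Suc n) y = (Fn lam n a - ?m*a + ?c*A) + (?m + ?c*B) * y"
  proof
    fix y assume y: "y \<in> {fst J..snd J}"
    then have y2: "a \<le> y" "y \<le> b" using sub by auto
    have "Fn lam (Suc n) y = Fn lam n y + ?c * hat a b y"
      using Fn_step[OF P(1), of y] ab y2 by simp
    also have "Fn lam n y = Fn lam n a + ?m * (y - a)"
      using Suc.IH[OF P(1), of y] ab y2 by simp
    finally show "Fn lam (Suc n) y = (Fn lam n a - ?m*a + ?c*A) + (?m + ?c*B) * y"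
      using AB y by (simp add: algebra_simps)
  qed
  from affine_norm[OF this sub(3) Suc.prems(2)] show ?case by (simp add: mJ_def)
qed

declare Fn.simps(2)[simp del]



lemma hat_vals:
  assumes "a < b"
  shows "hat a b a = 0" "hat a b (a+(b-a)/3) = 0" "hat a b (a+(b-a)/2) = 1"
    "hat a b (a+2*(b-a)/3) = 0" "hat a b b = 0"
proof -
  show "hat a b a = 0" "hat a b b = 0" using hat_out assms by auto
  have "a+(b-a)/3 \<in> {a..a+(b-a)/3}" using assms by simp
  then show "hat a b (a+(b-a)/3) = 0" using hat_pieces(1)[OF assms] by blast
  have "a+2*(b-a)/3 \<in> {a+2*(b-a)/3..b}" using assms by (auto simp: field_simps)
  then show "hat a b (a+2*(b-a)/3) = 0" using hat_pieces(3)[OF assms] by blast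
  have "a+(b-a)/2 \<in> {a+(b-a)/3..a+(b-a)/2}" using assms by simp
  then have "hat a b (a+(b-a)/2) = ((a+(b-a)/2) - (a+(b-a)/3)) * 6/(b-a)"
    using hat_pieces(2)[OF assms] by blast
  also have "\<dots> = 1" using assms by (simp add: field_simps)
  finally show "hat a b (a+(b-a)/2) = 1" .
qed

lemma Fn_at:
  assumes "(a,b) \<in> set (gen n)" "a \<le> p" "p \<le> b"
  shows "Fn lam (Suc n) p = Fn lam n a + mJ lam n (a,b) * (p - a) + lam * (b-a) * sig lam n (a,b) * hat a b p"
  using Fn_step[OF assms(1), of p] Fn_affine[OF assms(1), of p] assms by simp

lemma child_slopes:
  assumes "(a,b) \<in> set (gen n)"
  shows "mJ lam (Suc n) (a, a+(b-a)/3) = mJ lam n (a,b)"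
    "mJ lam (Suc n) (a+(b-a)/3, a+(b-a)/2) = mJ lam n (a,b) + 6*lam* sig lam n (a,b)"
    "mJ lam (Suc n) (a+(b-a)/2, a+2*(b-a)/3) = mJ lam n (a,b) - 6*lam* sig lam n (a,b)"
    "mJ lam (Suc n) (a+2*(b-a)/3, b) = mJ lam n (a,b)"
proof -
  have ab: "a < b" using gen_mem[OF assms] by simp
  define M where "M = mJ lam n (a,b)"
  let ?m = M and ?s = "sig lam n (a,b)"
  have pts: "a \<le> a+(b-a)/3" "a+(b-a)/3 \<le> b" "a \<le> a+(b-a)/2" "a+(b-a)/2 \<le> b"
     "a \<le> a+2*(b-a)/3" "a+2*(b-a)/3 \<le> b" using ab by (auto simp: field_simps)
  have F0: "Fn lam (Suc n) a = Fn lam n a"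
    using M_def Fn_at[OF assms, of a] hat_vals[OF ab] ab pts by simp
  have F1: "Fn lam (Suc n) (a+(b-a)/3) = Fn lam n a + ?m * ((b-a)/3)"
    using M_def Fn_at[OF assms, of "a+(b-a)/3"] hat_vals[OF ab] ab pts by simp
  have F2: "Fn lam (Suc n) (a+(b-a)/2) = Fn lam n a + ?m * ((b-a)/2) + lam*(b-a)*?s"
    using M_def Fn_at[OF assms, of "a+(b-a)/2"] hat_vals[OF ab] ab pts by simp
  have F3: "Fn lam (Suc n) (a+2*(b-a)/3) = Fn lam n a + ?m * (2*(b-a)/3)"
    using M_def Fn_at[OF assms, of "a+2*(b-a)/3"] hat_vals[OF ab] ab pts by simp
  have F4: "Fn lam (Suc n) b = Fn lam n a + ?m * (b-a)"
    using M_def Fn_at[OF assms, of b] hat_vals[OF ab] ab pts by simp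
  show "mJ lam (Suc n) (a, a+(b-a)/3) = mJ lam n (a,b)"
    unfolding M_def[symmetric]
    unfolding mJ_def[of lam "Suc n"] fst_conv snd_conv F0 F1 using ab by (simp add: field_simps)
  show "mJ lam (Suc n) (a+(b-a)/3, a+(b-a)/2) = mJ lam n (a,b) + 6*lam*?s"
    unfolding M_def[symmetric]
    unfolding mJ_def[of lam "Suc n"] fst_conv snd_conv F1 F2 using ab by (simp add: field_simps)
  show "mJ lam (Suc n) (a+(b-a)/2, a+2*(b-a)/3) = mJ lam n (a,b) - 6*lam*?s"
    unfolding M_def[symmetric]
    unfolding mJ_def[of lam "Suc n"] fst_conv snd_conv F2 F3 using ab by (simp add: field_simps)
  show "mJ lam (Suc n) (a+2*(b-a)/3, b) = mJ lam n (a,b)"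
    unfolding M_def[symmetric]
    unfolding mJ_def[of lam "Suc n"] fst_conv snd_conv F3 F4 using ab by (simp add: field_simps)
qed

lemma Fn_endpoint:
  assumes "J \<in> set (gen n)" "p = fst J \<or> p = snd J"
  shows "Fn lam (Suc n) p = Fn lam n p"
proof -
  have ab: "fst J < snd J" using gen_mem[OF assms(1)] by simp
  show ?thesis using Fn_step[OF assms(1), of p] hat_vals[OF ab] assms(2) ab by auto
qed

lemma sig_ge1: "1 \<le> sig lam n J"
  unfolding sig_def by simp

lemma abs_le_sig: "\<bar>mJ lam n J\<bar> \<le> sig lam n J"
  unfolding sig_def by (simp add: real_le_rsqrt)

lemma sig_sq: "(sig lam n J)^2 = 1 + (mJ lam n J)^2"
  unfolding sig_def by simp

lemma sig_of: "sqrt (1 + (mJ lam n J)^2) = sig lam n J"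
  unfolding sig_def by simp

lemma sqrt_step_bound:
  fixes m s lam :: real
  assumes "s^2 = 1 + m^2" "s \<ge> 0" "lam \<ge> 0"
  shows "sqrt (1 + (m + 6*lam* s)^2) \<le> (1+6*lam)* s"
    and "sqrt (1 + (m - 6*lam* s)^2) \<le> (1+6*lam)* s"
proof -
  have ms: "\<bar>m\<bar> \<le> s" using assms by (metis abs_le_square_iff abs_of_nonneg le_add_same_cancel2 zero_le_one)
  have h1: "m \<le> s" "-m \<le> s" using ms by auto
  have "m * s \<le> s * s" using h1(1) assms(2) by (rule mult_right_mono)
  moreover have "(-m) * s \<le> s * s" using h1(2) assms(2) by (rule mult_right_mono)
  ultimately have "m* s \<le> s* s" "(-m)* s \<le> s* s" by auto
  then have "1 + (m + 6*lam* s)^2 \<le> ((1+6*lam)* s)^2" "1 + (m - 6*lam* s)^2 \<le> ((1+6*lam)* s)^2"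
    using assms mult_left_mono[of "m* s" "s* s" "12*lam"] mult_left_mono[of "(-m)* s" "s* s" "12*lam"]
    by (auto simp: power2_eq_square algebra_simps)
  then show "sqrt (1 + (m + 6*lam* s)^2) \<le> (1+6*lam)* s" "sqrt (1 + (m - 6*lam* s)^2) \<le> (1+6*lam)* s"
    using assms by (auto intro!: real_le_lsqrt)
qed

locale Lam =
  fixes lam :: real
  assumes lam_gt: "1/6 < lam" and lam_lt: "lam < 5/6"
begin

definition rho :: real where "rho = (1 + 6*lam)/6"
definition K :: real where "K = lam / (1 - rho)"

lemma rho_facts: "rho < 1" "1/3 \<le> rho" "0 < 1 - rho"
  using lam_gt lam_lt unfolding rho_def by auto

lemma K_pos: "0 < K" unfolding K_def using rho_facts lam_gt by auto

lemma K_eq: "lam + K * rho = K"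
  unfolding K_def using rho_facts by (simp add: field_simps)

lemma child_facts:
  assumes "J \<in> set (gen n)" "c \<in> set (split4 J)"
  shows "c \<in> set (gen (Suc n))" "snd J - fst J \<le> 6 * (snd c - fst c)" "3 * (snd c - fst c) \<le> snd J - fst J"
    "sig lam (Suc n) c \<le> (1+6*lam) * sig lam n J"
    "(snd c - fst c) * sig lam (Suc n) c \<le> rho * ((snd J - fst J) * sig lam n J)"
    "fst J \<le> fst c" "snd c \<le> snd J" "fst c < snd c"
proof -
  obtain a b where J: "J = (a,b)" by force
  have ab: "a < b" using gen_mem[OF assms(1)] J by simp
  show "c \<in> set (gen (Suc n))" using assms by auto
  show "fst J \<le> fst c" "snd c \<le> snd J" "fst c < snd c" using split4_mem[OF assms(2)[unfolded J] ab] J by auto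
  let ?m = "mJ lam n (a,b)" and ?s = "sig lam n (a,b)"
  have lam0: "0 \<le> lam" using lam_gt by simp
  have sb: "sqrt (1 + (?m + 6*lam*?s)^2) \<le> (1+6*lam)*?s" "sqrt (1 + (?m - 6*lam*?s)^2) \<le> (1+6*lam)*?s"
    using sqrt_step_bound[OF sig_sq _ lam0] sig_ge1[of lam n "(a,b)"] by auto
  have s1: "1 \<le> ?s" by (rule sig_ge1)
  have cs: "c = (a, a+(b-a)/3) \<or> c = (a+(b-a)/3, a+(b-a)/2) \<or> c = (a+(b-a)/2, a+2*(b-a)/3) \<or> c = (a+2*(b-a)/3, b)"
    using assms(2) J by (simp add: split4_eq)
  have rr: "1/3 \<le> rho" "rho = (1+6*lam)/6" using rho_facts rho_def by auto
  have bs: "0 \<le> b - a" using ab by simp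
  have Wb3: "(b-a)/3 * ?s \<le> rho * ((b-a) * ?s)"
  proof -
    have "(b-a)/3 * ?s = (1/3) * ((b-a) * ?s)" by simp
    also have "\<dots> \<le> rho * ((b-a) * ?s)" using rr(1) s1 bs by (intro mult_right_mono) auto
    finally show ?thesis .
  qed
  have Wb6: "(b-a)/6 * sig lam (Suc n) c \<le> rho * ((b-a) * ?s)" if "sig lam (Suc n) c \<le> (1+6*lam) * ?s"
  proof -
    have "(b-a)/6 * sig lam (Suc n) c \<le> (b-a)/6 * ((1+6*lam) * ?s)" using that bs by (intro mult_left_mono) auto
    also have "\<dots> = rho * ((b-a) * ?s)" unfolding rr(2) by simp
    finally show ?thesis .
  qed
  have "(b - a \<le> 6 * (snd c - fst c) \<and> 3 * (snd c - fst c) \<le> b - a) \<and>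
    sig lam (Suc n) c \<le> (1+6*lam) * ?s \<and>
    (snd c - fst c) * sig lam (Suc n) c \<le> rho * ((b - a) * ?s)"
  proof (rule disjE[OF cs]; (elim disjE)?)
    assume c: "c = (a, a+(b-a)/3)"
    have S: "sig lam (Suc n) c = ?s" unfolding c sig_def child_slopes[OF assms(1)[unfolded J]] ..
    have L: "snd c - fst c = (b-a)/3" unfolding c by (simp add: field_simps)
    have W: "(snd c - fst c) * sig lam (Suc n) c \<le> rho * ((b-a) * ?s)" using Wb3 L S by (simp only:)
    have "0 \<le> lam * ?s" using s1 lam0 by simp
    then have "sig lam (Suc n) c \<le> (1+6*lam) * ?s" using S by (simp add: algebra_simps)
    then show ?thesis using L W ab by simp
  next
    assume c: "c = (a+2*(b-a)/3, b)"
    have S: "sig lam (Suc n) c = ?s" unfolding c sig_def child_slopes[OF assms(1)[unfolded J]] ..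
    have L: "snd c - fst c = (b-a)/3" unfolding c by (simp add: field_simps)
    have W: "(snd c - fst c) * sig lam (Suc n) c \<le> rho * ((b-a) * ?s)" using Wb3 L S by (simp only:)
    have "0 \<le> lam * ?s" using s1 lam0 by simp
    then have "sig lam (Suc n) c \<le> (1+6*lam) * ?s" using S by (simp add: algebra_simps)
    then show ?thesis using L W ab by simp
  next
    assume c: "c = (a+(b-a)/3, a+(b-a)/2)"
    have "sig lam (Suc n) c \<le> (1+6*lam) * ?s" unfolding c sig_def child_slopes[OF assms(1)[unfolded J]]
      using sb unfolding sig_def by simp
    moreover have L: "snd c - fst c = (b-a)/6" unfolding c by (simp add: field_simps)
    ultimately have W: "(snd c - fst c) * sig lam (Suc n) c \<le> rho * ((b-a) * ?s)" using Wb6 by (simp only:)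
    show ?thesis using L W ab \<open>sig lam (Suc n) c \<le> (1+6*lam) * ?s\<close> by simp
  next
    assume c: "c = (a+(b-a)/2, a+2*(b-a)/3)"
    have "sig lam (Suc n) c \<le> (1+6*lam) * ?s" unfolding c sig_def child_slopes[OF assms(1)[unfolded J]]
      using sb unfolding sig_def by simp
    moreover have L: "snd c - fst c = (b-a)/6" unfolding c by (simp add: field_simps)
    ultimately have W: "(snd c - fst c) * sig lam (Suc n) c \<le> rho * ((b-a) * ?s)" using Wb6 by (simp only:)
    show ?thesis using L W ab \<open>sig lam (Suc n) c \<le> (1+6*lam) * ?s\<close> by simp
  qed
  then show "snd J - fst J \<le> 6 * (snd c - fst c)" "3 * (snd c - fst c) \<le> snd J - fst J"
    "sig lam (Suc n) c \<le> (1+6*lam) * sig lam n J"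
    "(snd c - fst c) * sig lam (Suc n) c \<le> rho * ((snd J - fst J) * sig lam n J)" using J by auto
qed

end


lemma hat_bounds: "a < b \<Longrightarrow> 0 \<le> hat a b x \<and> hat a b x \<le> 1"
  unfolding hat_def Let_def by (auto simp: field_simps)

lemma split4_cover:
  assumes "a < b" "a \<le> y" "y \<le> b"
  shows "\<exists>c\<in>set (split4 (a,b)). fst c \<le> y \<and> y \<le> snd c"
proof -
  consider "y \<le> a+(b-a)/3" | "a+(b-a)/3 \<le> y \<and> y \<le> a+(b-a)/2" | "a+(b-a)/2 \<le> y \<and> y \<le> a+2*(b-a)/3"
    | "a+2*(b-a)/3 \<le> y" by linarith
  then show ?thesis
  proof cases
    case 1 then show ?thesis using assms by (intro bexI[of _ "(a, a+(b-a)/3)"]) (auto simp: split4_eq)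
  next
    case 2 then show ?thesis using assms by (intro bexI[of _ "(a+(b-a)/3, a+(b-a)/2)"]) (auto simp: split4_eq)
  next
    case 3 then show ?thesis using assms by (intro bexI[of _ "(a+(b-a)/2, a+2*(b-a)/3)"]) (auto simp: split4_eq)
  next
    case 4 then show ?thesis using assms by (intro bexI[of _ "(a+2*(b-a)/3, b)"]) (auto simp: split4_eq)
  qed
qed

definition Wd :: "real \<Rightarrow> nat \<Rightarrow> real \<times> real \<Rightarrow> real" where
  "Wd lam n J = (snd J - fst J) * sig lam n J"

lemma Wd_nonneg: "J \<in> set (gen n) \<Longrightarrow> 0 \<le> Wd lam n J"
  unfolding Wd_def using gen_mem[of J n] sig_ge1[of lam n J] by simp

context Lam begin

lemma tail:
  "J \<in> set (gen n) \<Longrightarrow> fst J \<le> y \<Longrightarrow> y \<le> snd J \<Longrightarrow> \<bar>Fn lam (n+k) y - Fn lam n y\<bar> \<le> K * Wd lam n J"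
proof (induction k arbitrary: n J)
  case 0
  then show ?case using Wd_nonneg[OF 0(1), of lam] K_pos by simp
next
  case (Suc k)
  obtain a b where J: "J = (a,b)" by force
  have ab: "a < b" using gen_mem[OF Suc.prems(1)] J by simp
  obtain c where c: "c \<in> set (split4 (a,b))" "fst c \<le> y" "y \<le> snd c"
    using split4_cover[OF ab, of y] Suc.prems J by auto
  have cf: "c \<in> set (gen (Suc n))" "Wd lam (Suc n) c \<le> rho * Wd lam n J"
    using child_facts[OF Suc.prems(1), of c] c J unfolding Wd_def by auto
  have IH: "\<bar>Fn lam (Suc n + k) y - Fn lam (Suc n) y\<bar> \<le> K * Wd lam (Suc n) c"
    using Suc.IH[OF cf(1) c(2,3)] .
  have st: "Fn lam (Suc n) y - Fn lam n y = lam * Wd lam n J * hat a b y"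
    using Fn_step[OF Suc.prems(1), of y] Suc.prems J unfolding Wd_def by simp
  have hb: "0 \<le> hat a b y" "hat a b y \<le> 1" using hat_bounds[OF ab] by auto
  have W0: "0 \<le> Wd lam n J" using Wd_nonneg[OF Suc.prems(1)] .
  have "\<bar>Fn lam n y - Fn lam (Suc n) y\<bar> \<le> lam * Wd lam n J"
  proof -
    have nn: "0 \<le> lam * Wd lam n J * hat a b y" using lam_gt W0 hb by simp
    have "\<bar>Fn lam n y - Fn lam (Suc n) y\<bar> = \<bar>Fn lam (Suc n) y - Fn lam n y\<bar>" by (rule abs_minus_commute)
    also have "\<dots> = lam * Wd lam n J * hat a b y" using st nn by simp
    also have "\<dots> \<le> lam * Wd lam n J * 1" using hb lam_gt W0 by (intro mult_left_mono) auto
    finally show ?thesis by simp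
  qed
  moreover have "K * Wd lam (Suc n) c \<le> K * (rho * Wd lam n J)"
    using cf(2) K_pos by (intro mult_left_mono) auto
  ultimately have B2: "\<bar>Fn lam n y - Fn lam (Suc n) y\<bar> + \<bar>Fn lam (Suc n + k) y - Fn lam (Suc n) y\<bar> \<le> lam * Wd lam n J + K * (rho * Wd lam n J)"
    using IH by linarith
  have "\<bar>Fn lam (Suc n + k) y - Fn lam n y\<bar> \<le> \<bar>Fn lam n y - Fn lam (Suc n) y\<bar> + \<bar>Fn lam (Suc n + k) y - Fn lam (Suc n) y\<bar>"
    using abs_triangle_ineq[of "Fn lam (Suc n + k) y - Fn lam (Suc n) y" "Fn lam (Suc n) y - Fn lam n y"]
    by (simp add: abs_minus_commute)
  also have "\<dots> \<le> lam * Wd lam n J + K * (rho * Wd lam n J)" by (rule B2)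
  also have "\<dots> = (lam + K * rho) * Wd lam n J" by (simp add: algebra_simps)
  also have "\<dots> = K * Wd lam n J" using K_eq by simp
  finally show ?case by simp
qed

end



definition childsel :: "bool \<Rightarrow> nat \<Rightarrow> real \<times> real \<Rightarrow> (real \<times> real) \<times> bool" where
  "childsel ori d J = (let a = fst J; b = snd J in
     if ori then (if d = 0 then ((a, a+(b-a)/3), True) else if d = 1 then ((a+(b-a)/3, a+(b-a)/2), True)
                else if d = 2 then ((a+(b-a)/2, a+2*(b-a)/3), False) else ((a+2*(b-a)/3, b), True))
     else (if d = 0 then ((a+2*(b-a)/3, b), False) else if d = 1 then ((a+(b-a)/2, a+2*(b-a)/3), False)
                else if d = 2 then ((a+(b-a)/3, a+(b-a)/2), True) else ((a, a+(b-a)/3), False)))"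

primrec Jx :: "real \<Rightarrow> nat \<Rightarrow> (real \<times> real) \<times> bool" where
  "Jx x 0 = ((0,1), True)"
| "Jx x (Suc n) = childsel (snd (Jx x n)) (udig n x) (fst (Jx x n))"

lemma childsel_mem: "fst (childsel ori d J) \<in> set (split4 J)"
proof -
  obtain a b where J: "J = (a,b)" by force
  show ?thesis unfolding J childsel_def Let_def split4_eq by auto
qed

lemma Jx_gen: "fst (Jx x n) \<in> set (gen n)"
proof (induction n)
  case 0 then show ?case by simp
next
  case (Suc n) then show ?case using split4_gen childsel_mem by simp
qed

lemma T_range: "0 \<le> t \<Longrightarrow> t \<le> 1 \<Longrightarrow> 0 \<le> T t \<and> T t \<le> 1"
  unfolding T_def by auto

definition tpos :: "bool \<Rightarrow> real \<times> real \<Rightarrow> real \<Rightarrow> real" where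
  "tpos ori J x = (if ori then (x - fst J)/(snd J - fst J) else (snd J - x)/(snd J - fst J))"

lemma childsel_ok:
  assumes "a < b" "0 \<le> t" "t \<le> 1" "t = tpos ori (a,b) x"
  shows "T t = tpos (snd (childsel ori (U t) (a,b))) (fst (childsel ori (U t) (a,b))) x"
proof -
  have l: "b - a > 0" using assms by simp
  have x: "x = (if ori then a + t*(b-a) else b - t*(b-a))"
    using assms(4) l unfolding tpos_def by (auto simp: field_simps)
  show ?thesis
  proof (cases ori)
    case True
    then have xx: "x = a + t*(b-a)" using x by simp
    show ?thesis unfolding xx using True l
      by (auto simp: U_def T_def childsel_def tpos_def field_simps)
  next
    case False
    then have xx: "x = b - t*(b-a)" using x by simp
    show ?thesis unfolding xx using False l
      by (auto simp: U_def T_def childsel_def tpos_def field_simps)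
  qed
qed

lemma Jx_inv:
  assumes "x \<in> {0..1}"
  shows "0 \<le> (T^^n) x \<and> (T^^n) x \<le> 1 \<and> (T^^n) x = tpos (snd (Jx x n)) (fst (Jx x n)) x"
proof (induction n)
  case 0 then show ?case using assms by (simp add: tpos_def)
next
  case (Suc n)
  obtain a b where J: "fst (Jx x n) = (a,b)" by force
  have ab: "a < b" using gen_mem[OF Jx_gen[of x n]] J by simp
  define t where "t = (T^^n) x"
  have t: "0 \<le> t" "t \<le> 1" "t = tpos (snd (Jx x n)) (a,b) x" using Suc J unfolding t_def by auto
  have Tt: "(T^^Suc n) x = T t" unfolding t_def by simp
  have Js: "Jx x (Suc n) = childsel (snd (Jx x n)) (U t) (a,b)" using J unfolding t_def by (simp add: udig_def)
  have eq: "T t = tpos (snd (Jx x (Suc n))) (fst (Jx x (Suc n))) x"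
    unfolding Js by (rule childsel_ok[OF ab t])
  have "0 \<le> T t \<and> T t \<le> 1" using T_range t by blast
  then show ?case using Tt eq by simp
qed

lemma tpos_in:
  assumes "a < b" "0 \<le> t" "t \<le> 1" "t = tpos ori (a,b) x"
  shows "a \<le> x \<and> x \<le> b"
  using assms unfolding tpos_def by (auto split: if_splits simp: field_simps)

lemma tpos_open:
  assumes "a < b" "0 < t" "t < 1" "t = tpos ori (a,b) x"
  shows "a < x \<and> x < b"
  using assms unfolding tpos_def by (auto split: if_splits simp: field_simps)

lemma Jx_mem:
  assumes "x \<in> {0..1}"
  shows "fst (fst (Jx x n)) \<le> x \<and> x \<le> snd (fst (Jx x n))"
proof -
  obtain a b where J: "fst (Jx x n) = (a,b)" by force
  have ab: "a < b" using gen_mem[OF Jx_gen[of x n]] J by simp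
  show ?thesis using tpos_in[OF ab, of "(T^^n) x" "snd (Jx x n)" x] Jx_inv[OF assms, of n] J by simp
qed

definition sv :: "real \<Rightarrow> real \<Rightarrow> nat \<Rightarrow> real" where
  "sv lam x n = (if snd (Jx x n) then mJ lam n (fst (Jx x n)) else - mJ lam n (fst (Jx x n)))"

definition stepf :: "real \<Rightarrow> nat \<Rightarrow> real \<Rightarrow> real" where
  "stepf lam d s = (if d = 1 then s + 6*lam* sqrt (1+s^2) else if d = 2 then 6*lam* sqrt (1+s^2) - s else s)"

lemma sig_sv: "sig lam n (fst (Jx x n)) = sqrt (1 + (sv lam x n)^2)"
  unfolding sig_def sv_def by simp

lemma sv_step: "sv lam x (Suc n) = stepf lam (udig n x) (sv lam x n)"
proof -
  obtain a b where J: "fst (Jx x n) = (a,b)" by force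
  have G: "(a,b) \<in> set (gen n)" using Jx_gen[of x n] J by simp
  have sg: "sig lam n (a,b) = sqrt (1 + (sv lam x n)^2)" using sig_sv[of lam n x] J by simp
  note cs = child_slopes[OF G, of lam]
  show ?thesis
    unfolding sv_def Jx.simps childsel_def J Let_def fst_conv snd_conv stepf_def
    using cs sg[unfolded sv_def J] by (auto simp: power2_eq_square)
qed



context Lam begin

lemma W_Jx: "Wd lam n (fst (Jx x n)) \<le> rho^n"
proof (induction n)
  case 0 then show ?case by (simp add: Wd_def sig_def mJ_def)
next
  case (Suc n)
  have c: "fst (Jx x (Suc n)) \<in> set (split4 (fst (Jx x n)))" using childsel_mem by simp
  have "Wd lam (Suc n) (fst (Jx x (Suc n))) \<le> rho * Wd lam n (fst (Jx x n))"
    using child_facts(5)[OF Jx_gen c] unfolding Wd_def .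
  also have "\<dots> \<le> rho * rho^n" using Suc rho_facts by (intro mult_left_mono) auto
  finally show ?case by simp
qed

lemma Fn_conv: assumes "y \<in> {0..1}" shows "(\<lambda>n. Fn lam n y) \<longlonglongrightarrow> Flim lam y"
proof -
  have bd: "\<bar>Fn lam m y - Fn lam n y\<bar> \<le> K * rho^n" if nm: "n \<le> m" for m n
  proof -
    obtain k where m: "m = n + k" using le_Suc_ex[OF nm] by blast
    have "\<bar>Fn lam (n+k) y - Fn lam n y\<bar> \<le> K * Wd lam n (fst (Jx y n))"
      using tail[OF Jx_gen[of y n] conjunct1[OF Jx_mem[OF assms]] conjunct2[OF Jx_mem[OF assms]], of k] .
    also have "\<dots> \<le> K * rho^n" using W_Jx K_pos by (intro mult_left_mono) auto
    finally show ?thesis using m by simp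
  qed
  have "Cauchy (\<lambda>n. Fn lam n y)"
  proof (rule CauchyI)
    fix e :: real assume e: "0 < e"
    have "\<exists>M. rho^M < e / (2*K)" by (rule real_arch_pow_inv) (use e K_pos rho_facts in auto)
    then obtain M where M: "rho^M < e / (2*K)" by blast
    have "\<forall>m\<ge>M. \<forall>n\<ge>M. norm (Fn lam m y - Fn lam n y) < e"
    proof (intro allI impI)
      fix m n assume mn: "M \<le> m" "M \<le> n"
      have "\<bar>Fn lam m y - Fn lam M y\<bar> \<le> K * rho^M" "\<bar>Fn lam n y - Fn lam M y\<bar> \<le> K * rho^M"
        using bd[OF mn(1)] bd[OF mn(2)] by auto
      moreover have "K * rho^M < e/2" using M K_pos by (simp add: field_simps)
      ultimately show "norm (Fn lam m y - Fn lam n y) < e" unfolding real_norm_def by arith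
    qed
    then show "\<exists>M. \<forall>m\<ge>M. \<forall>n\<ge>M. norm (Fn lam m y - Fn lam n y) < e" by blast
  qed
  then have "convergent (\<lambda>n. Fn lam n y)" by (rule real_Cauchy_convergent)
  then show ?thesis unfolding Flim_def convergent_LIMSEQ_iff .
qed

lemma F_tail:
  assumes "J \<in> set (gen n)" "fst J \<le> y" "y \<le> snd J"
  shows "\<bar>Flim lam y - Fn lam n y\<bar> \<le> K * Wd lam n J"
proof -
  have y: "y \<in> {0..1}" using gen_mem[OF assms(1)] assms by auto
  have "(\<lambda>k. Fn lam (k + n) y) \<longlonglongrightarrow> Flim lam y"
    using LIMSEQ_ignore_initial_segment[OF Fn_conv[OF y]] .
  then have "(\<lambda>k. \<bar>Fn lam (k + n) y - Fn lam n y\<bar>) \<longlonglongrightarrow> \<bar>Flim lam y - Fn lam n y\<bar>"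
    by (intro tendsto_intros)
  moreover have "\<forall>k\<ge>0. \<bar>Fn lam (k + n) y - Fn lam n y\<bar> \<le> K * Wd lam n J"
    using tail[OF assms] by (simp add: add.commute)
  ultimately show ?thesis by (intro LIMSEQ_le_const2) auto
qed

lemma F_two:
  assumes "J \<in> set (gen n)" "fst J \<le> u" "u \<le> snd J" "fst J \<le> v" "v \<le> snd J"
  shows "\<bar>Flim lam u - Flim lam v\<bar> \<le> (1 + 2*K) * Wd lam n J"
proof -
  have "Fn lam n u - Fn lam n v = mJ lam n J * (u - v)"
    using Fn_affine[OF assms(1), of u lam] Fn_affine[OF assms(1), of v lam] assms by (simp add: algebra_simps)
  moreover have "\<bar>mJ lam n J * (u - v)\<bar> \<le> sig lam n J * (snd J - fst J)"
    unfolding abs_mult using abs_le_sig[of lam n J] assms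
    by (intro mult_mono) auto
  ultimately have "\<bar>Fn lam n u - Fn lam n v\<bar> \<le> Wd lam n J" unfolding Wd_def by (simp add: mult.commute)
  moreover have "\<bar>Flim lam u - Fn lam n u\<bar> \<le> K * Wd lam n J" "\<bar>Flim lam v - Fn lam n v\<bar> \<le> K * Wd lam n J"
    using F_tail assms by auto
  ultimately show ?thesis by (simp only: distrib_right mult_1_left)
qed

lemma endpoint_persist:
  assumes "J \<in> set (gen n)" "p = fst J \<or> p = snd J"
  shows "\<exists>J'\<in>set (gen (n+k)). (p = fst J' \<or> p = snd J') \<and> Fn lam (n+k) p = Fn lam n p"
proof (induction k)
  case 0 then show ?case using assms by auto
next
  case (Suc k)
  then obtain J' where J': "J' \<in> set (gen (n+k))" "p = fst J' \<or> p = snd J'" "Fn lam (n+k) p = Fn lam n p" by blast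
  obtain a b where ab: "J' = (a,b)" by force
  have e: "Fn lam (Suc (n+k)) p = Fn lam (n+k) p" using Fn_endpoint[OF J'(1,2)] .
  show ?case
  proof (cases "p = a")
    case True
    have "(a, a+(b-a)/3) \<in> set (gen (Suc (n+k)))" using split4_gen[OF J'(1)] ab by (simp add: split4_eq)
    then show ?thesis using True e J'(3) by (intro bexI[of _ "(a, a+(b-a)/3)"]) auto
  next
    case False
    then have "p = b" using J'(2) ab by simp
    have "(a+2*(b-a)/3, b) \<in> set (gen (Suc (n+k)))" using split4_gen[OF J'(1)] ab by (simp add: split4_eq)
    then show ?thesis using \<open>p = b\<close> e J'(3) by (intro bexI[of _ "(a+2*(b-a)/3, b)"]) auto
  qed
qed

lemma F_end:
  assumes "J \<in> set (gen n)" "p = fst J \<or> p = snd J"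
  shows "Flim lam p = Fn lam n p"
proof -
  have p: "p \<in> {0..1}" using gen_mem[OF assms(1)] assms(2) by auto
  have "(\<lambda>k. Fn lam (k + n) p) \<longlonglongrightarrow> Flim lam p"
    using LIMSEQ_ignore_initial_segment[OF Fn_conv[OF p]] .
  moreover have "(\<lambda>k. Fn lam (k + n) p) = (\<lambda>k. Fn lam n p)"
    using endpoint_persist[OF assms] by (auto simp: add.commute)
  ultimately show ?thesis using LIMSEQ_unique tendsto_const by metis
qed

end


lemma hugL:
  assumes "(p,q) \<in> set (gen n)"
  shows "(p, p+(q-p)/3^k) \<in> set (gen (n+k)) \<and> mJ lam (n+k) (p, p+(q-p)/3^k) = mJ lam n (p,q)"
proof (induction k)
  case 0 then show ?case using assms by simp
next
  case (Suc k)
  define q' where "q' = p+(q-p)/3^k"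
  have G: "(p,q') \<in> set (gen (n+k))" "mJ lam (n+k) (p,q') = mJ lam n (p,q)" using Suc unfolding q'_def by auto
  have eq: "p+(q'-p)/3 = p+(q-p)/3^(Suc k)" unfolding q'_def by simp
  have "(p, p+(q'-p)/3) \<in> set (gen (Suc (n+k)))" using split4_gen[OF G(1)] by (simp add: split4_eq)
  moreover have "mJ lam (Suc (n+k)) (p, p+(q'-p)/3) = mJ lam (n+k) (p,q')" using child_slopes(1)[OF G(1)] .
  ultimately show ?case using G(2) unfolding eq by simp
qed

lemma hugR:
  assumes "(p,q) \<in> set (gen n)"
  shows "(q-(q-p)/3^k, q) \<in> set (gen (n+k)) \<and> mJ lam (n+k) (q-(q-p)/3^k, q) = mJ lam n (p,q)"
proof (induction k)
  case 0 then show ?case using assms by simp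
next
  case (Suc k)
  define p' where "p' = q-(q-p)/3^k"
  have G: "(p',q) \<in> set (gen (n+k))" "mJ lam (n+k) (p',q) = mJ lam n (p,q)" using Suc unfolding p'_def by auto
  have eq: "p'+2*(q-p')/3 = q-(q-p)/3^(Suc k)" unfolding p'_def by (simp add: field_simps)
  have "(p'+2*(q-p')/3, q) \<in> set (gen (Suc (n+k)))" using split4_gen[OF G(1)] by (simp add: split4_eq)
  moreover have "mJ lam (Suc (n+k)) (p'+2*(q-p')/3, q) = mJ lam (n+k) (p',q)" using child_slopes(4)[OF G(1)] .
  ultimately show ?case using G(2) unfolding eq by simp
qed

lemma exists_scale:
  fixes d L :: real
  assumes "0 < d" "d \<le> L"
  shows "\<exists>k. L/3^(Suc k) < d \<and> d \<le> L/3^k"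
proof -
  have L: "0 < L" using assms by linarith
  have "\<exists>k. (1/3::real)^k < d/L" by (rule real_arch_pow_inv) (use assms L in auto)
  then obtain k0 where "(1/3::real)^k0 < d/L" by blast
  then have P: "L/3^(Suc k0) < d" using L by (simp add: field_simps power_divide)
  define k where "k = (LEAST k. L/3^(Suc k) < d)"
  have Pk: "L/3^(Suc k) < d" unfolding k_def by (rule LeastI[of _ k0]) (rule P)
  have "d \<le> L/3^k"
  proof (cases k)
    case 0 then show ?thesis using assms by simp
  next
    case (Suc j)
    then have "\<not> L/3^(Suc j) < d" using not_less_Least[of j "\<lambda>k. L/3^(Suc k) < d"] unfolding k_def by simp
    then show ?thesis using Suc by simp
  qed
  then show ?thesis using Pk by blast
qed

context Lam begin

lemma hug_boundL:
  assumes "(p,q) \<in> set (gen n)" "p \<le> y" "y \<le> q"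
  shows "\<bar>Flim lam y - Flim lam p\<bar> \<le> 3*(1+2*K) * sig lam n (p,q) * (y - p)"
proof (cases "y = p")
  case True then show ?thesis by simp
next
  case False
  then have d: "0 < y - p" "y - p \<le> q - p" using assms by auto
  obtain k where k: "(q-p)/3^(Suc k) < y - p" "y - p \<le> (q-p)/3^k" using exists_scale[OF d] by blast
  have H: "(p, p+(q-p)/3^k) \<in> set (gen (n+k))" "mJ lam (n+k) (p, p+(q-p)/3^k) = mJ lam n (p,q)"
    using hugL[OF assms(1)] by auto
  have sH: "sig lam (n+k) (p, p+(q-p)/3^k) = sig lam n (p,q)" using H(2) unfolding sig_def by simp
  have "\<bar>Flim lam y - Flim lam p\<bar> \<le> (1+2*K) * Wd lam (n+k) (p, p+(q-p)/3^k)"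
    using F_two[OF H(1), of y p] k assms by auto
  also have "\<dots> = (1+2*K) * sig lam n (p,q) * ((q-p)/3^k)" unfolding Wd_def sH by simp
  also have "\<dots> \<le> (1+2*K) * sig lam n (p,q) * (3*(y-p))"
  proof -
    have e: "(q-p)/3^k = 3 * ((q-p)/3^(Suc k))" by (simp add: field_simps)
    have "3 * ((q-p)/3^(Suc k)) \<le> 3*(y-p)" by (rule mult_left_mono[OF less_imp_le[OF k(1)]]) simp
    then have "(q-p)/3^k \<le> 3*(y-p)" by (simp only: e)
    then show ?thesis using K_pos sig_ge1[of lam n "(p,q)"] by (intro mult_left_mono) auto
  qed
  finally show ?thesis by (simp add: algebra_simps)
qed

lemma hug_boundR:
  assumes "(p,q) \<in> set (gen n)" "p \<le> y" "y \<le> q"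
  shows "\<bar>Flim lam y - Flim lam q\<bar> \<le> 3*(1+2*K) * sig lam n (p,q) * (q - y)"
proof (cases "y = q")
  case True then show ?thesis by simp
next
  case False
  then have d: "0 < q - y" "q - y \<le> q - p" using assms by auto
  obtain k where k: "(q-p)/3^(Suc k) < q - y" "q - y \<le> (q-p)/3^k" using exists_scale[OF d] by blast
  have H: "(q-(q-p)/3^k, q) \<in> set (gen (n+k))" "mJ lam (n+k) (q-(q-p)/3^k, q) = mJ lam n (p,q)"
    using hugR[OF assms(1)] by auto
  have sH: "sig lam (n+k) (q-(q-p)/3^k, q) = sig lam n (p,q)" using H(2) unfolding sig_def by simp
  have "\<bar>Flim lam y - Flim lam q\<bar> \<le> (1+2*K) * Wd lam (n+k) (q-(q-p)/3^k, q)"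
    using F_two[OF H(1), of y q] k assms by auto
  also have "\<dots> = (1+2*K) * sig lam n (p,q) * ((q-p)/3^k)" unfolding Wd_def sH by simp
  also have "\<dots> \<le> (1+2*K) * sig lam n (p,q) * (3*(q-y))"
  proof -
    have e: "(q-p)/3^k = 3 * ((q-p)/3^(Suc k))" by (simp add: field_simps)
    have "3 * ((q-p)/3^(Suc k)) \<le> 3*(q-y)" by (rule mult_left_mono[OF less_imp_le[OF k(1)]]) simp
    then have "(q-p)/3^k \<le> 3*(q-y)" by (simp only: e)
    then show ?thesis using K_pos sig_ge1[of lam n "(p,q)"] by (intro mult_left_mono) auto
  qed
  finally show ?thesis by (simp add: algebra_simps)
qed

end


lemma children_rel:
  assumes "c \<in> set (split4 (a,b))" "d \<in> set (split4 (a,b))" "a < b"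
    "fst c \<le> x" "x \<le> snd c" "fst d \<le> y" "y \<le> snd d" "\<not> (fst c \<le> y \<and> y \<le> snd c)"
  shows "snd c = fst d \<or> snd d = fst c \<or> (b-a)/6 \<le> \<bar>y - x\<bar>"
  using assms unfolding split4_eq by (auto simp: field_simps)

context Lam begin

lemma gen_len: "J \<in> set (gen n) \<Longrightarrow> (1/6)^n \<le> snd J - fst J \<and> snd J - fst J \<le> (1/3)^n"
proof (induction n arbitrary: J)
  case 0 then show ?case by simp
next
  case (Suc n)
  obtain P where P: "P \<in> set (gen n)" "J \<in> set (split4 P)" using Suc.prems by auto
  have "snd P - fst P \<le> 6 * (snd J - fst J)" "3 * (snd J - fst J) \<le> snd P - fst P"
    using child_facts[OF P] by auto
  then show ?case using Suc.IH[OF P(1)] by auto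
qed


lemma holder_gen:
  assumes x: "x \<in> {0..1}" and g: "0 \<le> \<gamma>" "\<gamma> < 1" and C: "0 < C"
    and sb: "\<And>k. sig lam k (fst (Jx x k)) \<le> C * (snd (fst (Jx x k)) - fst (fst (Jx x k))) powr (-\<gamma>)"
  shows "\<exists>C'. \<forall>y\<in>{0..1}. \<bar>Flim lam y - Flim lam x\<bar> \<le> C' * \<bar>y - x\<bar> powr (1-\<gamma>)"
proof -
  define D where "D = 3*(1+2*K)*(1+6*lam)"
  have D1: "1+2*K \<le> D" unfolding D_def using K_pos lam_gt by (simp add: algebra_simps)
  have Dpos: "0 < D" unfolding D_def using K_pos lam_gt by simp
  define J where "J = (\<lambda>k. fst (Jx x k))"
  have Jg: "J k \<in> set (gen k)" for k unfolding J_def by (rule Jx_gen)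
  have Jm: "fst (J k) \<le> x" "x \<le> snd (J k)" for k unfolding J_def using Jx_mem[OF x] by auto
  have Jc: "J (Suc k) \<in> set (split4 (J k))" for k unfolding J_def using childsel_mem by simp
  have main: "\<bar>Flim lam y - Flim lam x\<bar> \<le> (6*D*C) * \<bar>y - x\<bar> powr (1-\<gamma>)" if y: "y \<in> {0..1}" for y
  proof (cases "y = x")
    case True then show ?thesis by simp
  next
    case False
    define r where "r = \<bar>y - x\<bar>"
    have r: "0 < r" unfolding r_def using False by simp
    have "\<exists>N. (1/3::real)^N < r" by (rule real_arch_pow_inv) (use r in auto)
    then obtain N where N: "(1/3::real)^N < r" by blast
    have notin: "\<not> (fst (J N) \<le> y \<and> y \<le> snd (J N))"
    proof
      assume "fst (J N) \<le> y \<and> y \<le> snd (J N)"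
      then have "r \<le> snd (J N) - fst (J N)" unfolding r_def using Jm[of N] by auto
      also have "\<dots> \<le> (1/3)^N" using gen_len[OF Jg] by auto
      finally show False using N by simp
    qed
    define N0 where "N0 = (LEAST N. \<not> (fst (J N) \<le> y \<and> y \<le> snd (J N)))"
    have N0: "\<not> (fst (J N0) \<le> y \<and> y \<le> snd (J N0))" unfolding N0_def by (rule LeastI[of _ N]) (rule notin)
    have "N0 \<noteq> 0"
    proof
      assume "N0 = 0"
      then show False using N0 y by (simp add: J_def)
    qed
    then obtain n where n: "N0 = Suc n" using not0_implies_Suc by blast
    have yin: "fst (J n) \<le> y" "y \<le> snd (J n)"
      using not_less_Least[of n "\<lambda>N. \<not> (fst (J N) \<le> y \<and> y \<le> snd (J N))"] n unfolding N0_def[symmetric] by auto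
    obtain a b where ab: "J n = (a,b)" by force
    have ab2: "a < b" using gen_mem[OF Jg[of n]] ab by simp
    define c where "c = J (Suc n)"
    have c: "c \<in> set (split4 (a,b))" "fst c \<le> x" "x \<le> snd c" "\<not> (fst c \<le> y \<and> y \<le> snd c)"
      using Jc[of n] ab Jm[of "Suc n"] N0 n unfolding c_def by auto
    obtain d where d: "d \<in> set (split4 (a,b))" "fst d \<le> y" "y \<le> snd d"
      using split4_cover[OF ab2, of y] yin ab by auto
    have rl: "r \<le> b - a" unfolding r_def using yin Jm[of n] ab by auto
    define sg where "sg = sig lam n (a,b)"
    have sgb: "sg \<le> C * r powr (-\<gamma>)"
    proof -
      have "sg \<le> C * (b-a) powr (-\<gamma>)" using sb[of n] ab unfolding sg_def J_def by simp
      also have "\<dots> \<le> C * r powr (-\<gamma>)" using powr_mono2'[of "-\<gamma>" r "b-a"] g r rl C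
        by (intro mult_left_mono) auto
      finally show ?thesis .
    qed
    have sgb2: "sg * r \<le> C * r powr (1-\<gamma>)"
    proof -
      have "sg * r \<le> C * r powr (-\<gamma>) * r" using sgb r by (intro mult_right_mono) auto
      also have "\<dots> = C * (r powr (-\<gamma>) * r powr 1)" using r by simp
      also have "\<dots> = C * r powr (-\<gamma> + 1)" by (simp only: powr_add)
      also have "\<dots> = C * r powr (1-\<gamma>)" by simp
      finally show ?thesis .
    qed
    have Gn: "(a,b) \<in> set (gen n)" using Jg[of n] ab by simp
    have cG: "c \<in> set (gen (Suc n))" "sig lam (Suc n) c \<le> (1+6*lam) * sg" using child_facts[OF Gn c(1)] unfolding sg_def by auto
    have dG: "d \<in> set (gen (Suc n))" "sig lam (Suc n) d \<le> (1+6*lam) * sg" using child_facts[OF Gn d(1)] unfolding sg_def by auto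
    have hugc: "\<bar>Flim lam x - Flim lam (snd c)\<bar> \<le> D * sg * (snd c - x)"
      "\<bar>Flim lam x - Flim lam (fst c)\<bar> \<le> D * sg * (x - fst c)"
    proof -
      have cc: "(fst c, snd c) \<in> set (gen (Suc n))" using cG by simp
      have "\<bar>Flim lam x - Flim lam (snd c)\<bar> \<le> 3*(1+2*K) * sig lam (Suc n) c * (snd c - x)"
        using hug_boundR[OF cc, of x] c by simp
      also have "\<dots> \<le> 3*(1+2*K) * ((1+6*lam) * sg) * (snd c - x)"
        using cG(2) c K_pos by (intro mult_right_mono mult_left_mono) auto
      finally show "\<bar>Flim lam x - Flim lam (snd c)\<bar> \<le> D * sg * (snd c - x)" unfolding D_def by (simp add: algebra_simps)
      have "\<bar>Flim lam x - Flim lam (fst c)\<bar> \<le> 3*(1+2*K) * sig lam (Suc n) c * (x - fst c)"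
        using hug_boundL[OF cc, of x] c by simp
      also have "\<dots> \<le> 3*(1+2*K) * ((1+6*lam) * sg) * (x - fst c)"
        using cG(2) c K_pos by (intro mult_right_mono mult_left_mono) auto
      finally show "\<bar>Flim lam x - Flim lam (fst c)\<bar> \<le> D * sg * (x - fst c)" unfolding D_def by (simp add: algebra_simps)
    qed
    have hugd: "\<bar>Flim lam y - Flim lam (snd d)\<bar> \<le> D * sg * (snd d - y)"
      "\<bar>Flim lam y - Flim lam (fst d)\<bar> \<le> D * sg * (y - fst d)"
    proof -
      have dd: "(fst d, snd d) \<in> set (gen (Suc n))" using dG by simp
      have "\<bar>Flim lam y - Flim lam (snd d)\<bar> \<le> 3*(1+2*K) * sig lam (Suc n) d * (snd d - y)"
        using hug_boundR[OF dd, of y] d by simp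
      also have "\<dots> \<le> 3*(1+2*K) * ((1+6*lam) * sg) * (snd d - y)"
        using dG(2) d K_pos by (intro mult_right_mono mult_left_mono) auto
      finally show "\<bar>Flim lam y - Flim lam (snd d)\<bar> \<le> D * sg * (snd d - y)" unfolding D_def by (simp add: algebra_simps)
      have "\<bar>Flim lam y - Flim lam (fst d)\<bar> \<le> 3*(1+2*K) * sig lam (Suc n) d * (y - fst d)"
        using hug_boundL[OF dd, of y] d by simp
      also have "\<dots> \<le> 3*(1+2*K) * ((1+6*lam) * sg) * (y - fst d)"
        using dG(2) d K_pos by (intro mult_right_mono mult_left_mono) auto
      finally show "\<bar>Flim lam y - Flim lam (fst d)\<bar> \<le> D * sg * (y - fst d)" unfolding D_def by (simp add: algebra_simps)
    qed
    have rp: "0 \<le> r powr (1-\<gamma>)" by simp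
    have CD: "D * C * r powr (1-\<gamma>) \<le> 6*D*C * r powr (1-\<gamma>)"
      using Dpos C rp by (intro mult_right_mono) auto
    consider "snd c = fst d" | "snd d = fst c" | "(b-a)/6 \<le> \<bar>y - x\<bar>"
      using children_rel[OF c(1) d(1) ab2 c(2,3) d(2,3) c(4)] by blast
    then have "\<bar>Flim lam y - Flim lam x\<bar> \<le> (6*D*C) * r powr (1-\<gamma>)"
    proof cases
      case 1
      have xy: "x \<le> snd c" "fst d \<le> y" "r = (y - fst d) + (snd c - x)" unfolding r_def using c d 1 by auto
      have "\<bar>Flim lam y - Flim lam x\<bar> \<le> \<bar>Flim lam y - Flim lam (fst d)\<bar> + \<bar>Flim lam x - Flim lam (snd c)\<bar>"
        using 1 abs_triangle_ineq4[of "Flim lam y - Flim lam (fst d)" "Flim lam x - Flim lam (snd c)"] by simp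
      also have "\<dots> \<le> D * sg * (y - fst d) + D * sg * (snd c - x)" using hugc hugd by linarith
      also have "\<dots> = D * (sg * r)" unfolding xy(3) by (simp add: algebra_simps)
      also have "\<dots> \<le> D * (C * r powr (1-\<gamma>))" using sgb2 Dpos by (intro mult_left_mono) auto
      finally show ?thesis using CD by (simp add: algebra_simps)
    next
      case 2
      have xy: "y \<le> snd d" "fst c \<le> x" "r = (snd d - y) + (x - fst c)" unfolding r_def using c d 2 by auto
      have "\<bar>Flim lam y - Flim lam x\<bar> \<le> \<bar>Flim lam y - Flim lam (snd d)\<bar> + \<bar>Flim lam x - Flim lam (fst c)\<bar>"
        using 2 abs_triangle_ineq4[of "Flim lam y - Flim lam (snd d)" "Flim lam x - Flim lam (fst c)"] by simp
      also have "\<dots> \<le> D * sg * (snd d - y) + D * sg * (x - fst c)" using hugc hugd by linarith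
      also have "\<dots> = D * (sg * r)" unfolding xy(3) by (simp add: algebra_simps)
      also have "\<dots> \<le> D * (C * r powr (1-\<gamma>))" using sgb2 Dpos by (intro mult_left_mono) auto
      finally show ?thesis using CD by (simp add: algebra_simps)
    next
      case 3
      have l6: "b - a \<le> 6 * r" using 3 unfolding r_def by simp
      have "\<bar>Flim lam y - Flim lam x\<bar> \<le> (1+2*K) * Wd lam n (a,b)"
        using F_two[OF Gn, of y x] yin Jm[of n] ab by simp
      also have "\<dots> = (1+2*K) * ((b-a) * sg)" unfolding Wd_def sg_def by simp
      also have "\<dots> \<le> (1+2*K) * ((b-a) * (C * (b-a) powr (-\<gamma>)))"
      proof -
        have "sg \<le> C * (b-a) powr (-\<gamma>)" using sb[of n] ab unfolding sg_def J_def by simp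
        then show ?thesis using K_pos ab2 by (intro mult_left_mono) auto
      qed
      also have "\<dots> = (1+2*K) * C * ((b-a) powr (-\<gamma>) * (b-a) powr 1)" using ab2 by simp
      also have "\<dots> = (1+2*K) * C * (b-a) powr (-\<gamma> + 1)" by (simp only: powr_add)
      also have "\<dots> = (1+2*K) * C * (b-a) powr (1-\<gamma>)" by simp
      also have "\<dots> \<le> (1+2*K) * C * (6*r) powr (1-\<gamma>)"
        using l6 ab2 g K_pos C by (intro mult_left_mono powr_mono2) auto
      also have "\<dots> = (1+2*K) * C * (6 powr (1-\<gamma>) * r powr (1-\<gamma>))" using r by (simp add: powr_mult)
      also have "\<dots> \<le> D * C * (6 * r powr (1-\<gamma>))"
      proof -
        have "6 powr (1-\<gamma>) \<le> 6 powr 1" using g by (intro powr_mono) auto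
        then have f1: "6 powr (1-\<gamma>) * r powr (1-\<gamma>) \<le> 6 * r powr (1-\<gamma>)" using rp by (intro mult_right_mono) auto
        have f2: "(1+2*K) * C \<le> D * C" using D1 C by (intro mult_right_mono) auto
        show ?thesis by (rule mult_mono[OF f2 f1]) (use C Dpos in auto)
      qed
      finally show ?thesis by (simp add: algebra_simps)
    qed
    then show ?thesis unfolding r_def .
  qed
  then show ?thesis by blast
qed

end


lemma abs4: "\<bar>(u1::real) + u3 - 2*u2 + w\<bar> \<le> \<bar>u1\<bar> + \<bar>u3\<bar> + 2*\<bar>u2\<bar> + \<bar>w\<bar>"
  by arith

lemma poly_2nd_term:
  fixes t1 t2 t3 l :: real
  assumes "t2 = (t1+t3)/2" "\<bar>t1\<bar> \<le> l" "\<bar>t2\<bar> \<le> l" "\<bar>t3\<bar> \<le> l" "l \<le> 1"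
  shows "\<bar>t1^i + t3^i - 2*t2^i\<bar> \<le> 4 * l^2"
proof -
  have l0: "0 \<le> l" using assms by linarith
  consider "i = 0" | "i = 1" | "2 \<le> i" by linarith
  then show ?thesis
  proof cases
    case 1 then show ?thesis by simp
  next
    case 2
    have "t1 + t3 - 2*t2 = 0" using assms(1) by simp
    then show ?thesis using 2 by simp
  next
    case 3
    have b: "\<bar>t^i\<bar> \<le> l^2" if "\<bar>t\<bar> \<le> l" for t :: real
    proof -
      have "\<bar>t^i\<bar> = \<bar>t\<bar>^i" by (simp add: power_abs)
      also have "\<dots> \<le> l^i" using that by (intro power_mono) auto
      also have "\<dots> \<le> l^2" using power_decreasing[OF 3 l0 assms(5)] .
      finally show ?thesis .
    qed
    have "\<bar>t1^i + t3^i - 2*t2^i\<bar> \<le> \<bar>t1^i\<bar> + \<bar>t3^i\<bar> + 2*\<bar>t2^i\<bar>" by linarith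
    also have "\<dots> \<le> l^2 + l^2 + 2*l^2" using b assms(2,3,4) by (intro add_mono mult_left_mono) auto
    finally show ?thesis by simp
  qed
qed

lemma poly_2nd:
  fixes t1 t2 t3 l :: real
  assumes "t2 = (t1+t3)/2" "\<bar>t1\<bar> \<le> l" "\<bar>t2\<bar> \<le> l" "\<bar>t3\<bar> \<le> l" "l \<le> 1"
  shows "\<bar>poly P t1 + poly P t3 - 2 * poly P t2\<bar> \<le> 4 * (\<Sum>i\<le>degree P. \<bar>coeff P i\<bar>) * l^2"
proof -
  have "poly P t1 + poly P t3 - 2 * poly P t2 = (\<Sum>i\<le>degree P. coeff P i * (t1^i + t3^i - 2*t2^i))"
    unfolding poly_altdef by (simp add: algebra_simps sum.distrib sum_subtractf sum_distrib_left)
  also have "\<bar>\<dots>\<bar> \<le> (\<Sum>i\<le>degree P. \<bar>coeff P i * (t1^i + t3^i - 2*t2^i)\<bar>)" by (rule sum_abs)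
  also have "\<dots> \<le> (\<Sum>i\<le>degree P. \<bar>coeff P i\<bar> * (4 * l^2))"
    unfolding abs_mult using poly_2nd_term[OF assms] by (intro sum_mono mult_left_mono) auto
  also have "\<dots> = (\<Sum>i\<le>degree P. \<bar>coeff P i\<bar>) * (4 * l^2)" by (rule sum_distrib_right[symmetric])
  also have "\<dots> = 4 * (\<Sum>i\<le>degree P. \<bar>coeff P i\<bar>) * l^2" by simp
  finally show ?thesis .
qed

context Lam begin

lemma bump_identity:
  assumes G: "(a,b) \<in> set (gen n)"
  shows "Flim lam (a+(b-a)/3) + Flim lam (a+2*(b-a)/3) - 2 * Flim lam (a+(b-a)/2) = -2*lam*(b-a)* sig lam n (a,b)"
proof -
  have ab: "a < b" using gen_mem[OF G] by simp
  have pts: "a \<le> a+(b-a)/3" "a+(b-a)/3 \<le> b" "a \<le> a+(b-a)/2" "a+(b-a)/2 \<le> b"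
     "a \<le> a+2*(b-a)/3" "a+2*(b-a)/3 \<le> b" using ab by (auto simp: field_simps)
  have S: "set (split4 (a,b)) \<subseteq> set (gen (Suc n))" using split4_gen[OF G] by auto
  have c1: "(a, a+(b-a)/3) \<in> set (gen (Suc n))" and c2: "(a+(b-a)/3, a+(b-a)/2) \<in> set (gen (Suc n))"
    and c3: "(a+(b-a)/2, a+2*(b-a)/3) \<in> set (gen (Suc n))" using S by (auto simp: split4_eq)
  have E1: "Flim lam (a+(b-a)/3) = Fn lam (Suc n) (a+(b-a)/3)" using F_end[OF c1] by simp
  have E2: "Flim lam (a+(b-a)/2) = Fn lam (Suc n) (a+(b-a)/2)" using F_end[OF c2] by simp
  have E3: "Flim lam (a+2*(b-a)/3) = Fn lam (Suc n) (a+2*(b-a)/3)" using F_end[OF c3] by simp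
  define M where "M = mJ lam n (a,b)"
  have F1: "Fn lam (Suc n) (a+(b-a)/3) = Fn lam n a + M * ((b-a)/3)"
    using M_def Fn_at[OF G, of "a+(b-a)/3"] hat_vals[OF ab] ab pts by simp
  have F2: "Fn lam (Suc n) (a+(b-a)/2) = Fn lam n a + M * ((b-a)/2) + lam*(b-a)* sig lam n (a,b)"
    using M_def Fn_at[OF G, of "a+(b-a)/2"] hat_vals[OF ab] ab pts by simp
  have F3: "Fn lam (Suc n) (a+2*(b-a)/3) = Fn lam n a + M * (2*(b-a)/3)"
    using M_def Fn_at[OF G, of "a+2*(b-a)/3"] hat_vals[OF ab] ab pts by simp
  show ?thesis unfolding E1 E2 E3 F1 F2 F3 by (simp add: field_simps)
qed


lemma not_holder_gt1:
  assumes x: "x \<in> {0..1}" and a1: "1 < \<alpha>"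
  shows "\<not> pw_hoelder {0..1} (Flim lam) x \<alpha>"
proof
  assume "pw_hoelder {0..1} (Flim lam) x \<alpha>"
  then obtain P :: "real poly" and C \<delta> where dl: "\<delta> > 0"
    and HP: "\<And>y. y \<in> {0..1} \<Longrightarrow> \<bar>y - x\<bar> < \<delta> \<Longrightarrow> \<bar>Flim lam y - poly P (y - x)\<bar> \<le> C * \<bar>y - x\<bar> powr \<alpha>"
    unfolding pw_hoelder_def by blast
  define A where "A = (\<Sum>i\<le>degree P. \<bar>coeff P i\<bar>)"
  have A0: "0 \<le> A" unfolding A_def by (intro sum_nonneg) auto
  define q where "q = (\<lambda>n::nat. (1/3::real)^n)"
  have q0: "q \<longlonglongrightarrow> 0" unfolding q_def by (intro LIMSEQ_power_zero) simp
  have qp: "(\<lambda>n. q n powr (\<alpha> - 1)) \<longlonglongrightarrow> 0"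
    by (rule tendsto_zero_powrI[OF q0 tendsto_const]) (use a1 in \<open>auto simp: q_def\<close>)
  have "(\<lambda>n. 4*\<bar>C\<bar>*(q n powr (\<alpha> - 1)) + 4*A*q n) \<longlonglongrightarrow> 4*\<bar>C\<bar>*0 + 4*A*0"
    by (intro tendsto_intros qp q0)
  then have ev1: "\<forall>\<^sub>F n in sequentially. 4*\<bar>C\<bar>*(q n powr (\<alpha> - 1)) + 4*A*q n < 2*lam"
    using lam_gt by (intro order_tendstoD(2)) auto
  have ev2: "\<forall>\<^sub>F n in sequentially. q n < \<delta>" using order_tendstoD(2)[OF q0 dl] .
  obtain n where n1: "4*\<bar>C\<bar>*(q n powr (\<alpha> - 1)) + 4*A*q n < 2*lam" and n2: "q n < \<delta>"
    using eventually_happens'[OF _ eventually_conj[OF ev1 ev2]] by auto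
  obtain a b where ab: "fst (Jx x n) = (a,b)" by force
  have G: "(a,b) \<in> set (gen n)" using Jx_gen[of x n] ab by simp
  have ab2: "a < b" "0 \<le> a" "b \<le> 1" using gen_mem[OF G] by auto
  have xab: "a \<le> x" "x \<le> b" using Jx_mem[OF x, of n] ab by auto
  define l where "l = b - a"
  have l0: "0 < l" unfolding l_def using ab2 by simp
  have lq: "l \<le> q n" unfolding l_def q_def using gen_len[OF G] by simp
  have q1: "q n \<le> 1" unfolding q_def by (simp add: power_le_one)
  define p1 where "p1 = a+(b-a)/3"
  define p2 where "p2 = a+(b-a)/2"
  define p3 where "p3 = a+2*(b-a)/3"
  have pin: "p1 \<in> {a..b}" "p2 \<in> {a..b}" "p3 \<in> {a..b}" unfolding p1_def p2_def p3_def using ab2 by (auto simp: field_simps)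
  have pd: "\<bar>p - x\<bar> \<le> l" if "p \<in> {a..b}" for p using that xab unfolding l_def by auto
  have Eb: "\<bar>Flim lam p - poly P (p - x)\<bar> \<le> \<bar>C\<bar> * l powr \<alpha>" if "p \<in> {a..b}" for p
  proof -
    have p01: "p \<in> {0..1}" using that ab2 by auto
    have "\<bar>p - x\<bar> < \<delta>" using pd[OF that] lq n2 by linarith
    then have "\<bar>Flim lam p - poly P (p - x)\<bar> \<le> C * \<bar>p - x\<bar> powr \<alpha>" using HP p01 by blast
    also have "\<dots> \<le> \<bar>C\<bar> * \<bar>p - x\<bar> powr \<alpha>" by (intro mult_right_mono) auto
    also have "\<dots> \<le> \<bar>C\<bar> * l powr \<alpha>" using pd[OF that] a1 by (intro mult_left_mono powr_mono2) auto
    finally show ?thesis .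
  qed
  have mid: "p2 - x = ((p1 - x) + (p3 - x))/2" unfolding p1_def p2_def p3_def by (simp add: field_simps)
  have dP: "\<bar>poly P (p1 - x) + poly P (p3 - x) - 2 * poly P (p2 - x)\<bar> \<le> 4 * A * l^2"
    unfolding A_def using poly_2nd[OF mid pd[OF pin(1)] pd[OF pin(2)] pd[OF pin(3)]] lq q1 by auto
  have bump: "Flim lam p1 + Flim lam p3 - 2 * Flim lam p2 = -2*lam*l* sig lam n (a,b)"
    unfolding p1_def p2_def p3_def l_def using bump_identity[OF G] by simp
  have "2*lam*l \<le> 2*lam*l* sig lam n (a,b)" using sig_ge1[of lam n "(a,b)"] lam_gt l0 by simp
  also have "\<dots> = \<bar>Flim lam p1 + Flim lam p3 - 2 * Flim lam p2\<bar>" using bump lam_gt l0 sig_ge1[of lam n "(a,b)"] by simp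
  also have "\<dots> \<le> \<bar>Flim lam p1 - poly P (p1 - x)\<bar> + \<bar>Flim lam p3 - poly P (p3 - x)\<bar> + 2 * \<bar>Flim lam p2 - poly P (p2 - x)\<bar>
      + \<bar>poly P (p1 - x) + poly P (p3 - x) - 2 * poly P (p2 - x)\<bar>"
    using abs4[of "Flim lam p1 - poly P (p1 - x)" "Flim lam p3 - poly P (p3 - x)" "Flim lam p2 - poly P (p2 - x)"
      "poly P (p1 - x) + poly P (p3 - x) - 2 * poly P (p2 - x)"] by (simp add: algebra_simps)
  also have "\<dots> \<le> \<bar>C\<bar> * l powr \<alpha> + \<bar>C\<bar> * l powr \<alpha> + 2 * (\<bar>C\<bar> * l powr \<alpha>) + 4 * A * l^2"
    using Eb[OF pin(1)] Eb[OF pin(2)] Eb[OF pin(3)] dP by linarith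
  also have "\<dots> = 4*\<bar>C\<bar>* l powr \<alpha> + 4*A*l^2" by simp
  also have "\<dots> \<le> l * (4*\<bar>C\<bar>*(q n powr (\<alpha> - 1)) + 4*A*q n)"
  proof -
    have "l powr \<alpha> = l * l powr (\<alpha> - 1)" using l0 by (simp add: powr_mult_base)
    also have "\<dots> \<le> l * q n powr (\<alpha> - 1)" using lq l0 a1 by (intro mult_left_mono powr_mono2) auto
    finally have h1: "l powr \<alpha> \<le> l * q n powr (\<alpha> - 1)" .
    have h2: "l^2 \<le> l * q n" using lq l0 by (simp add: power2_eq_square)
    have "4*\<bar>C\<bar>* l powr \<alpha> \<le> 4*\<bar>C\<bar>* (l * q n powr (\<alpha> - 1))" using h1 by (intro mult_left_mono) auto
    moreover have "4*A*l^2 \<le> 4*A*(l * q n)" using h2 A0 by (intro mult_left_mono) auto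
    ultimately show ?thesis by (simp add: algebra_simps)
  qed
  also have "\<dots> < l * (2*lam)" using n1 l0 by (intro mult_strict_left_mono) auto
  finally show False by simp
qed

end


lemma betacount_Suc: "betacount i x (Suc n) = betacount i x n + (if udig n x = i then 1 else 0)"
proof -
  have e: "{k. k < Suc n \<and> udig k x = i} = (if udig n x = i then insert n {k. k < n \<and> udig k x = i} else {k. k < n \<and> udig k x = i})"
    by (auto simp: less_Suc_eq)
  show ?thesis unfolding betacount_def e by (auto simp: card_insert_disjoint)
qed

lemma betacount_le: "betacount i x n \<le> n"
proof -
  have "{k. k < n \<and> udig k x = i} \<subseteq> {..<n}" by auto
  then show ?thesis unfolding betacount_def using card_mono[of "{..<n}"] by fastforce
qed

lemma betacount_0: "betacount i x 0 = 0"
  unfolding betacount_def by simp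

lemma udig_range: "udig n x \<in> {0,1,2,3}"
  unfolding udig_def U_def by auto

context Lam begin

definition L1 :: real where "L1 = ln (6*lam+1)"
definition L2 :: real where "L2 = ln (6*lam-1)"
definition Sx :: "real \<Rightarrow> nat \<Rightarrow> real" where
  "Sx x n = real (betacount 1 x n) * L1 + real (betacount 2 x n) * L2"
definition am :: "nat \<Rightarrow> real" where
  "am d = (if d = 1 then 6*lam+1 else if d = 2 then 6*lam-1 else 1)"

lemma Sx_Suc: "exp (Sx x (Suc n) - Sx x n) = am (udig n x)"
proof -
  have p1: "0 < 6*lam+1" "0 < 6*lam-1" using lam_gt by auto
  have "Sx x (Suc n) - Sx x n = (if udig n x = 1 then L1 else 0) + (if udig n x = 2 then L2 else 0)"
    unfolding Sx_def betacount_Suc by (auto simp: algebra_simps)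
  then show ?thesis unfolding am_def L1_def L2_def using p1 by auto
qed

lemma Sx_0: "Sx x 0 = 0" unfolding Sx_def betacount_0 by simp

lemma am_pos: "0 < am d" unfolding am_def using lam_gt by auto

lemma sv_nonneg: "0 \<le> sv lam x n"
proof (induction n)
  case 0 then show ?case by (simp add: sv_def mJ_def)
next
  case (Suc n)
  have "sv lam x n \<le> sqrt (1 + (sv lam x n)^2)" by (simp add: real_le_rsqrt)
  moreover have "1 * sqrt (1 + (sv lam x n)^2) \<le> (6*lam) * sqrt (1 + (sv lam x n)^2)"
    using lam_gt by (intro mult_right_mono) auto
  ultimately show ?case unfolding sv_step stepf_def using Suc lam_gt by auto
qed

lemma sv_lower: "am (udig n x) * sv lam x n \<le> sv lam x (Suc n)"
proof -
  define s where "s = sv lam x n"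
  have s0: "0 \<le> s" unfolding s_def by (rule sv_nonneg)
  have ss: "s \<le> sqrt (1 + s^2)" by (simp add: real_le_rsqrt)
  have "6*lam * s \<le> 6*lam* sqrt (1+s^2)" using ss lam_gt by (intro mult_left_mono) auto
  then show ?thesis unfolding sv_step stepf_def am_def s_def[symmetric] by (auto simp: algebra_simps)
qed

lemma sv_pos12: "udig n x = 1 \<or> udig n x = 2 \<Longrightarrow> 6*lam - 1 \<le> sv lam x (Suc n)"
proof -
  assume d: "udig n x = 1 \<or> udig n x = 2"
  define s where "s = sv lam x n"
  define g where "g = sqrt (1 + s^2)"
  have s0: "0 \<le> s" unfolding s_def by (rule sv_nonneg)
  have ss: "s \<le> g" "1 \<le> g" unfolding g_def by (auto simp: real_le_rsqrt)
  have "(6*lam - 1) * 1 \<le> (6*lam-1) * g" using ss lam_gt by (intro mult_left_mono) auto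
  moreover have "6*lam*1 \<le> 6*lam*g" using ss lam_gt by (intro mult_left_mono) auto
  ultimately show ?thesis using d ss s0 unfolding sv_step stepf_def s_def[symmetric] g_def[symmetric]
    by (auto simp: algebra_simps)
qed

lemma sig_upper: "sqrt (1 + (sv lam x (Suc n))^2) \<le> am (udig n x) * sqrt (1 + (sv lam x n)^2) + 2"
proof -
  define s where "s = sv lam x n"
  define g where "g = sqrt (1 + s^2)"
  have s0: "0 \<le> s" unfolding s_def by (rule sv_nonneg)
  have g0: "0 \<le> g" unfolding g_def by simp
  have ss: "s \<le> g" "1 \<le> g" unfolding g_def by (auto simp: real_le_rsqrt)
  have gs: "g \<le> s + 1" unfolding g_def using s0 by (intro real_le_lsqrt) (auto simp: power2_eq_square algebra_simps)
  have l0: "0 \<le> lam" using lam_gt by simp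
  have b1: "sqrt (1 + (s + 6*lam*g)^2) \<le> (1+6*lam)*g"
    using sqrt_step_bound(1)[of g s lam] s0 l0 unfolding g_def by simp
  have sq1: "sqrt (1 + t^2) \<le> 1 + t" if "0 \<le> t" for t :: real
    using that by (intro real_le_lsqrt) (auto simp: power2_eq_square algebra_simps)
  have "6*lam*1 \<le> 6*lam*g" using ss l0 by (intro mult_left_mono) auto
  have "1 * g \<le> (6*lam) * g" using lam_gt g0 by (intro mult_right_mono) auto
  then have t0: "0 \<le> 6*lam*g - s" using ss by linarith
  have b2: "sqrt (1 + (6*lam*g - s)^2) \<le> (6*lam-1)*g + 2"
    using sq1[OF t0] gs by (simp add: algebra_simps)
  consider "udig n x = 1" | "udig n x = 2" | "udig n x \<noteq> 1 \<and> udig n x \<noteq> 2" by blast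
  then show ?thesis
  proof cases
    case 1 then show ?thesis unfolding sv_step stepf_def am_def s_def[symmetric] g_def[symmetric] using b1 by (simp add: algebra_simps)
  next
    case 2 then show ?thesis unfolding sv_step stepf_def am_def s_def[symmetric] g_def[symmetric] using b2 by (simp add: algebra_simps)
  next
    case 3 then show ?thesis unfolding sv_step stepf_def am_def s_def[symmetric] by (simp add: g_def)
  qed
qed

lemma sv_lower_prod: "m \<le> n \<Longrightarrow> sv lam x m * exp (Sx x n - Sx x m) \<le> sv lam x n"
proof (induction n rule: dec_induct)
  case base then show ?case by simp
next
  case (step n)
  have "sv lam x m * exp (Sx x (Suc n) - Sx x m) = (sv lam x m * exp (Sx x n - Sx x m)) * exp (Sx x (Suc n) - Sx x n)"
    by (simp add: exp_add[symmetric])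
  also have "\<dots> = am (udig n x) * (sv lam x m * exp (Sx x n - Sx x m))" unfolding Sx_Suc by simp
  also have "\<dots> \<le> am (udig n x) * sv lam x n" using step.IH am_pos[of "udig n x"] by (intro mult_left_mono) auto
  also have "\<dots> \<le> sv lam x (Suc n)" by (rule sv_lower)
  finally show ?case .
qed

lemma sig_upper_sum: "sqrt (1 + (sv lam x n)^2) \<le> 2 * (\<Sum>j\<le>n. exp (Sx x n - Sx x j))"
proof (induction n)
  case 0 then show ?case by (simp add: sv_def mJ_def)
next
  case (Suc n)
  have "sqrt (1 + (sv lam x (Suc n))^2) \<le> am (udig n x) * sqrt (1 + (sv lam x n)^2) + 2" by (rule sig_upper)
  also have "\<dots> \<le> am (udig n x) * (2 * (\<Sum>j\<le>n. exp (Sx x n - Sx x j))) + 2"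
    using Suc am_pos[of "udig n x"] by (intro add_right_mono mult_left_mono) auto
  also have "am (udig n x) * (2 * (\<Sum>j\<le>n. exp (Sx x n - Sx x j))) = 2 * (\<Sum>j\<le>n. exp (Sx x (Suc n) - Sx x j))"
  proof -
    have "am (udig n x) * exp (Sx x n - Sx x j) = exp (Sx x (Suc n) - Sx x j)" for j
      unfolding Sx_Suc[symmetric] by (simp add: exp_add[symmetric])
    then show ?thesis by (simp add: sum_distrib_left algebra_simps)
  qed
  finally show ?case by simp
qed

end


context Lam begin

lemma abs_Sx: "\<bar>Sx x n\<bar> \<le> real n * (\<bar>L1\<bar> + \<bar>L2\<bar>)"
proof -
  have "\<bar>Sx x n\<bar> \<le> real (betacount 1 x n) * \<bar>L1\<bar> + real (betacount 2 x n) * \<bar>L2\<bar>"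
    unfolding Sx_def by (simp add: abs_mult) (metis abs_mult abs_of_nat abs_triangle_ineq)
  also have "\<dots> \<le> real n * \<bar>L1\<bar> + real n * \<bar>L2\<bar>"
    using betacount_le[of 1 x n] betacount_le[of 2 x n] by (intro add_mono mult_right_mono) auto
  finally show ?thesis by (simp add: algebra_simps)
qed

lemma S_asym:
  assumes l1: "(\<lambda>n. real (betacount 1 x n) / real n) \<longlonglongrightarrow> b1"
    and l2: "(\<lambda>n. real (betacount 2 x n) / real n) \<longlonglongrightarrow> b2" and e: "0 < \<epsilon>"
  shows "\<exists>C1\<ge>0. \<forall>n. Sx x n \<le> (b1*L1 + b2*L2 + \<epsilon>) * real n + C1 \<and> (b1*L1 + b2*L2 - \<epsilon>) * real n - C1 \<le> Sx x n"
proof -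
  define E where "E = b1*L1 + b2*L2"
  have "(\<lambda>n. real (betacount 1 x n) / real n * L1 + real (betacount 2 x n) / real n * L2) \<longlonglongrightarrow> b1*L1 + b2*L2"
    by (intro tendsto_intros l1 l2)
  moreover have "(\<lambda>n. real (betacount 1 x n) / real n * L1 + real (betacount 2 x n) / real n * L2) = (\<lambda>n. Sx x n / real n)"
    unfolding Sx_def by (auto simp: add_divide_distrib)
  ultimately have lim: "(\<lambda>n. Sx x n / real n) \<longlonglongrightarrow> E" unfolding E_def by simp
  then have "\<forall>\<^sub>F n in sequentially. dist (Sx x n / real n) E < \<epsilon>" using e by (rule tendstoD)
  then obtain N where N: "\<And>n. n \<ge> N \<Longrightarrow> \<bar>Sx x n / real n - E\<bar> < \<epsilon>"
    unfolding eventually_sequentially dist_real_def by blast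
  define C1 where "C1 = real N * (\<bar>L1\<bar> + \<bar>L2\<bar> + \<bar>E\<bar> + \<epsilon>)"
  have C0: "0 \<le> C1" unfolding C1_def using e by simp
  have "Sx x n \<le> (E + \<epsilon>) * real n + C1 \<and> (E - \<epsilon>) * real n - C1 \<le> Sx x n" for n
  proof (cases "n \<ge> N \<and> n > 0")
    case True
    then have np: "0 < real n" by simp
    have "\<bar>Sx x n / real n - E\<bar> < \<epsilon>" using N True by blast
    then have "Sx x n / real n < E + \<epsilon>" "E - \<epsilon> < Sx x n / real n" by auto
    then have "Sx x n < (E + \<epsilon>) * real n" "(E - \<epsilon>) * real n < Sx x n"
      using np by (auto simp: pos_divide_less_eq pos_less_divide_eq)
    then show ?thesis using C0 by auto
  next
    case False
    then have nN: "real n \<le> real N" by auto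
    have a: "\<bar>Sx x n\<bar> \<le> real N * (\<bar>L1\<bar> + \<bar>L2\<bar>)"
      using abs_Sx[of x n] nN by (meson abs_ge_zero add_nonneg_nonneg mult_right_mono order.trans)
    have b: "\<bar>(E + \<epsilon>) * real n\<bar> \<le> real N * (\<bar>E\<bar> + \<epsilon>)" "\<bar>(E - \<epsilon>) * real n\<bar> \<le> real N * (\<bar>E\<bar> + \<epsilon>)"
    proof -
      have "\<bar>E + \<epsilon>\<bar> \<le> \<bar>E\<bar> + \<epsilon>" "\<bar>E - \<epsilon>\<bar> \<le> \<bar>E\<bar> + \<epsilon>" using e by auto
      then show "\<bar>(E + \<epsilon>) * real n\<bar> \<le> real N * (\<bar>E\<bar> + \<epsilon>)" "\<bar>(E - \<epsilon>) * real n\<bar> \<le> real N * (\<bar>E\<bar> + \<epsilon>)"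
        unfolding abs_mult using nN e by (auto intro!: mult_mono simp: mult.commute)
    qed
    have "C1 = real N * (\<bar>L1\<bar> + \<bar>L2\<bar>) + real N * (\<bar>E\<bar> + \<epsilon>)" unfolding C1_def by (simp add: algebra_simps)
    then show ?thesis using a b by (auto simp: abs_le_iff)
  qed
  then show ?thesis using C0 unfolding E_def by blast
qed

lemma bc_bounded_lim:
  assumes "\<forall>k\<ge>N. udig k x \<noteq> i"
  shows "(\<lambda>n. real (betacount i x n) / real n) \<longlonglongrightarrow> 0"
proof (rule tendsto_sandwich[of "\<lambda>n. 0" _ _ "\<lambda>n. real N / real n"])
  have "betacount i x n \<le> N" for n
  proof -
    have "{k. k < n \<and> udig k x = i} \<subseteq> {..<N}" using assms by (auto simp: not_le[symmetric])
    then show ?thesis unfolding betacount_def using card_mono[of "{..<N}"] by fastforce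
  qed
  then show "\<forall>\<^sub>F n in sequentially. real (betacount i x n) / real n \<le> real N / real n"
    by (intro always_eventually allI divide_right_mono) auto
  show "\<forall>\<^sub>F n in sequentially. 0 \<le> real (betacount i x n) / real n" by simp
  show "(\<lambda>n. 0::real) \<longlonglongrightarrow> 0" by simp
  show "(\<lambda>n. real N / real n) \<longlonglongrightarrow> 0" by (rule lim_const_over_n)
qed

lemma digits12_exist:
  assumes l1: "(\<lambda>n. real (betacount 1 x n) / real n) \<longlonglongrightarrow> b1"
    and l2: "(\<lambda>n. real (betacount 2 x n) / real n) \<longlonglongrightarrow> b2"
    and E: "b1*L1 + b2*L2 \<noteq> 0"
  shows "\<exists>k\<ge>N. udig k x = 1 \<or> udig k x = 2"
proof (rule ccontr)
  assume "\<not> ?thesis"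
  then have "\<forall>k\<ge>N. udig k x \<noteq> 1" "\<forall>k\<ge>N. udig k x \<noteq> 2" by auto
  then have "b1 = 0" "b2 = 0" using LIMSEQ_unique bc_bounded_lim l1 l2 by blast+
  then show False using E by simp
qed

end


lemma T_fix: "(T^^k) 0 = 0" "(T^^k) 1 = 1"
  by (induction k) (auto simp: T_def)

lemma U_01: "U 0 = 0" "U 1 = 3" unfolding U_def by auto

lemma notE_open:
  assumes x: "x \<in> {0..1}" and nE: "x \<notin> Eset"
  shows "0 < (T^^n) x \<and> (T^^n) x < 1"
proof -
  have t: "0 \<le> (T^^n) x" "(T^^n) x \<le> 1" using Jx_inv[OF x, of n] by auto
  have shift: "(T^^k) x = (T^^(k-n)) ((T^^n) x)" if "n \<le> k" for k
  proof -
    have "k = (k-n) + n" using that by simp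
    then have "(T^^k) x = (T^^((k-n)+n)) x" by simp
    then show ?thesis by (simp add: funpow_add)
  qed
  have "(T^^n) x \<noteq> 0"
  proof
    assume z: "(T^^n) x = 0"
    have "\<forall>k\<ge>n. udig k x = 0" unfolding udig_def using shift z T_fix U_01 by simp
    then show False using nE unfolding Eset_def by blast
  qed
  moreover have "(T^^n) x \<noteq> 1"
  proof
    assume z: "(T^^n) x = 1"
    have "\<forall>k\<ge>n. udig k x = 3" unfolding udig_def using shift z T_fix U_01 by simp
    then show False using nE unfolding Eset_def by blast
  qed
  ultimately show ?thesis using t by auto
qed

lemma deriv_affine:
  assumes G: "(a,b) \<in> set (gen n)" and x: "a < x" "x < b"
  shows "deriv (Fn lam n) x = mJ lam n (a,b)"
proof -
  let ?g = "\<lambda>y. Fn lam n a + mJ lam n (a,b) * (y - a)"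
  have "(?g has_field_derivative mJ lam n (a,b)) (at x)"
    by (auto intro!: derivative_eq_intros)
  then have "(Fn lam n has_field_derivative mJ lam n (a,b)) (at x)"
  proof (rule has_field_derivative_transform_within_open[of _ _ _ "{a<..<b}"])
    show "open {a<..<b}" by simp
    show "x \<in> {a<..<b}" using x by simp
    fix y assume "y \<in> {a<..<b}"
    then show "?g y = Fn lam n y" using Fn_affine[OF G, of y lam] by simp
  qed
  then show ?thesis by (rule DERIV_imp_deriv)
qed

context Lam begin

lemma slope_eq:
  assumes x: "x \<in> {0..1}" and nE: "x \<notin> Eset"
  shows "\<bar>slope lam n x\<bar> = sv lam x n"
proof -
  obtain a b where ab: "fst (Jx x n) = (a,b)" by force
  have G: "(a,b) \<in> set (gen n)" using Jx_gen[of x n] ab by simp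
  have ab2: "a < b" using gen_mem[OF G] by simp
  have t: "0 < (T^^n) x" "(T^^n) x < 1" using notE_open[OF x nE] by auto
  have "a < x \<and> x < b" using tpos_open[OF ab2 t, of "snd (Jx x n)" x] Jx_inv[OF x, of n] ab by simp
  then have "slope lam n x = mJ lam n (a,b)" unfolding slope_def using deriv_affine[OF G] by simp
  moreover have "sv lam x n = \<bar>mJ lam n (a,b)\<bar>" using sv_nonneg[of x n] unfolding sv_def ab by (auto split: if_splits)
  ultimately show ?thesis by simp
qed

lemma sv_to_inf:
  assumes l1: "(\<lambda>n. real (betacount 1 x n) / real n) \<longlonglongrightarrow> b1"
    and l2: "(\<lambda>n. real (betacount 2 x n) / real n) \<longlonglongrightarrow> b2"
    and E: "0 < b1*L1 + b2*L2"
  shows "filterlim (\<lambda>n. sv lam x n) at_top sequentially"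
proof -
  define E where "E = b1*L1 + b2*L2"
  have E0: "0 < E" using E unfolding E_def .
  obtain k where k: "udig k x = 1 \<or> udig k x = 2" using digits12_exist[OF l1 l2, of 0] E by auto
  have sk: "6*lam - 1 \<le> sv lam x (Suc k)" using sv_pos12[OF k] .
  have c0: "0 < 6*lam - 1" using lam_gt by simp
  obtain C1 where C1: "\<forall>n. (E - E/2) * real n - C1 \<le> Sx x n"
    using S_asym[OF l1 l2, of "E/2"] E0 unfolding E_def by auto
  define C2 where "C2 = C1 + Sx x (Suc k)"
  have low: "(6*lam - 1) * ((E/2) * real n - C2) \<le> sv lam x n" if "Suc k \<le> n" for n
  proof -
    have "(E/2) * real n - C2 \<le> Sx x n - Sx x (Suc k)" using C1 unfolding C2_def by (smt (verit) field_sum_of_halves)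
    also have "\<dots> \<le> exp (Sx x n - Sx x (Suc k))" using exp_ge_add_one_self[of "Sx x n - Sx x (Suc k)"] by linarith
    finally have h: "(E/2) * real n - C2 \<le> exp (Sx x n - Sx x (Suc k))" .
    have "(6*lam - 1) * ((E/2) * real n - C2) \<le> (6*lam - 1) * exp (Sx x n - Sx x (Suc k))"
      using h c0 by (intro mult_left_mono) auto
    also have "\<dots> \<le> sv lam x (Suc k) * exp (Sx x n - Sx x (Suc k))"
      using sk by (intro mult_right_mono) auto
    also have "\<dots> \<le> sv lam x n" using sv_lower_prod[OF that] .
    finally show ?thesis .
  qed
  show ?thesis unfolding filterlim_at_top
  proof
    fix Z :: real
    obtain M :: nat where M: "(Z/(6*lam-1) + C2) * 2 / E \<le> real M" using real_arch_simple by blast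
    have "Z \<le> sv lam x n" if "max M (Suc k) \<le> n" for n
    proof -
      have "(Z/(6*lam-1) + C2) * 2 / E \<le> real n" using M that by linarith
      then have "Z/(6*lam-1) + C2 \<le> real n * E / 2" using E0 by (simp add: field_simps)
      moreover have "(E/2) * real n = real n * E / 2" by simp
      ultimately have "Z/(6*lam-1) \<le> (E/2) * real n - C2" by linarith
      then have "Z \<le> (6*lam - 1) * ((E/2) * real n - C2)" using c0 by (simp add: field_simps)
      also have "\<dots> \<le> sv lam x n" using low that by simp
      finally show ?thesis .
    qed
    then show "\<forall>\<^sub>F n in sequentially. Z \<le> sv lam x n" unfolding eventually_sequentially by blast
  qed
qed

end


context Lam begin

lemma sig_bound:
  assumes l1: "(\<lambda>n. real (betacount 1 x n) / real n) \<longlonglongrightarrow> b1"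
    and l2: "(\<lambda>n. real (betacount 2 x n) / real n) \<longlonglongrightarrow> b2"
    and E: "b1*L1 + b2*L2 \<le> 0" and g: "0 < \<gamma>" "\<gamma> < 1"
  shows "\<exists>C>0. \<forall>k. sig lam k (fst (Jx x k)) \<le> C * (snd (fst (Jx x k)) - fst (fst (Jx x k))) powr (-\<gamma>)"
proof -
  define E where "E = b1*L1 + b2*L2"
  have E0: "E \<le> 0" using E unfolding E_def .
  have ln3: "0 < ln (3::real)" by simp
  define \<epsilon> where "\<epsilon> = min 1 (\<gamma> * ln 3 / 3)"
  have e0: "0 < \<epsilon>" "\<epsilon> \<le> 1" "3 * \<epsilon> \<le> \<gamma> * ln 3" unfolding \<epsilon>_def using g ln3 by auto
  obtain C1 where C1: "C1 \<ge> 0" "\<forall>n. Sx x n \<le> (E + \<epsilon>) * real n + C1 \<and> (E - \<epsilon>) * real n - C1 \<le> Sx x n"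
    using S_asym[OF l1 l2 e0(1)] unfolding E_def by blast
  define C where "C = 2 * exp (2*C1) / \<epsilon>"
  have Cp: "0 < C" unfolding C_def using e0 by simp
  have "sig lam k (fst (Jx x k)) \<le> C * (snd (fst (Jx x k)) - fst (fst (Jx x k))) powr (-\<gamma>)" for k
  proof -
    have trm: "exp (Sx x k - Sx x j) \<le> exp (2*\<epsilon>*real k + 2*C1)" if "j \<le> k" for j
    proof -
      have "E * (real k - real j) \<le> 0" using E0 that by (intro mult_nonpos_nonneg) auto
      moreover have "\<epsilon> * real j \<le> \<epsilon> * real k" using e0 that by (intro mult_left_mono) auto
      moreover have "Sx x k \<le> (E + \<epsilon>) * real k + C1" "(E - \<epsilon>) * real j - C1 \<le> Sx x j" using C1 by auto
      ultimately have "Sx x k - Sx x j \<le> 2*\<epsilon>*real k + 2*C1" by (simp add: algebra_simps)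
      then show ?thesis by simp
    qed
    have "sig lam k (fst (Jx x k)) = sqrt (1 + (sv lam x k)^2)" by (rule sig_sv)
    also have "\<dots> \<le> 2 * (\<Sum>j\<le>k. exp (Sx x k - Sx x j))" by (rule sig_upper_sum)
    also have "\<dots> \<le> 2 * (\<Sum>j\<le>k. exp (2*\<epsilon>*real k + 2*C1))" using trm by (intro mult_left_mono sum_mono) auto
    also have "\<dots> = 2 * (real k + 1) * exp (2*\<epsilon>*real k + 2*C1)" by simp
    also have "\<dots> \<le> 2 * (exp (\<epsilon> * real k) / \<epsilon>) * exp (2*\<epsilon>*real k + 2*C1)"
    proof -
      have "\<epsilon> * (real k + 1) \<le> 1 + \<epsilon> * real k" using e0 by (simp add: algebra_simps)
      also have "\<dots> \<le> exp (\<epsilon> * real k)" by (rule exp_ge_add_one_self)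
      finally have "real k + 1 \<le> exp (\<epsilon> * real k) / \<epsilon>" using e0 by (simp add: field_simps)
      then show ?thesis by (intro mult_right_mono mult_left_mono) auto
    qed
    also have "\<dots> = C * exp (3*\<epsilon>*real k)" unfolding C_def by (simp add: exp_add[symmetric] field_simps)
    also have "\<dots> \<le> C * exp (\<gamma> * ln 3 * real k)" using e0 Cp by (intro mult_left_mono) (auto intro: mult_right_mono)
    also have "exp (\<gamma> * ln 3 * real k) = ((1/3)^k) powr (-\<gamma>)"
      by (simp add: powr_def ln_realpow ln_div)
    also have "C * \<dots> \<le> C * (snd (fst (Jx x k)) - fst (fst (Jx x k))) powr (-\<gamma>)"
    proof -
      have "0 < snd (fst (Jx x k)) - fst (fst (Jx x k))" using gen_mem[OF Jx_gen[of x k]] by simp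
      moreover have "snd (fst (Jx x k)) - fst (fst (Jx x k)) \<le> (1/3)^k" using gen_len[OF Jx_gen[of x k]] by simp
      ultimately show ?thesis using Cp g by (intro mult_left_mono powr_mono2') auto
    qed
    finally show ?thesis .
  qed
  then show ?thesis using Cp by blast
qed

lemma part_ii:
  assumes x: "x \<in> {0..1}"
    and l1: "(\<lambda>n. real (betacount 1 x n) / real n) \<longlonglongrightarrow> b1"
    and l2: "(\<lambda>n. real (betacount 2 x n) / real n) \<longlonglongrightarrow> b2"
    and E: "b1*L1 + b2*L2 \<le> 0"
  shows "hoelder_exp {0..1} (Flim lam) x = 1"
proof -
  define A where "A = {\<alpha>. \<alpha> \<ge> 0 \<and> pw_hoelder {0..1} (Flim lam) x \<alpha>}"
  have inA: "\<alpha> \<in> A" if a: "0 < \<alpha>" "\<alpha> < 1" for \<alpha>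
  proof -
    define \<gamma> where "\<gamma> = 1 - \<alpha>"
    have g: "0 < \<gamma>" "\<gamma> < 1" unfolding \<gamma>_def using a by auto
    obtain C where C: "0 < C" "\<And>k. sig lam k (fst (Jx x k)) \<le> C * (snd (fst (Jx x k)) - fst (fst (Jx x k))) powr (-\<gamma>)"
      using sig_bound[OF l1 l2 E g] by blast
    obtain C' where C': "\<forall>y\<in>{0..1}. \<bar>Flim lam y - Flim lam x\<bar> \<le> C' * \<bar>y - x\<bar> powr (1-\<gamma>)"
      using holder_gen[OF x less_imp_le[OF g(1)] g(2) C(1) C(2)] by blast
    have "pw_hoelder {0..1} (Flim lam) x \<alpha>"
      unfolding pw_hoelder_def
    proof (intro exI conjI)
      show "degree [:Flim lam x:] \<le> nat \<lfloor>\<alpha>\<rfloor>" by simp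
      show "(1::real) > 0" by simp
      show "\<forall>y\<in>{0..1}. \<bar>y - x\<bar> < 1 \<longrightarrow> \<bar>Flim lam y - poly [:Flim lam x:] (y - x)\<bar> \<le> C' * \<bar>y - x\<bar> powr \<alpha>"
        using C' unfolding \<gamma>_def by simp
    qed
    then show ?thesis unfolding A_def using a by simp
  qed
  have notA: "\<alpha> \<le> 1" if "\<alpha> \<in> A" for \<alpha>
    using not_holder_gt1[OF x, of \<alpha>] that unfolding A_def by force
  have "Sup (ereal ` A) = 1"
  proof (rule Sup_eqI)
    fix y assume "y \<in> ereal ` A"
    then show "y \<le> 1" using notA by auto
  next
    fix u assume u: "\<And>z. z \<in> ereal ` A \<Longrightarrow> z \<le> u"
    show "1 \<le> u"
    proof (rule dense_le_bounded[of 0])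
      show "(0::ereal) < 1" by simp
      fix w :: ereal assume w: "0 < w" "w < 1"
      then obtain r where r: "w = ereal r" by (cases w) auto
      then have "0 < r" "r < 1" using w by auto
      then have "r \<in> A" by (rule inA)
      then show "w \<le> u" using u r by auto
    qed
  qed
  then show ?thesis unfolding hoelder_exp_def A_def .
qed

end

theorem lemma5p3:
  fixes lam :: real and \<beta> :: "nat \<Rightarrow> real" and x :: real
  assumes "1/6 < lam" and "lam < 5/6"
    and "\<forall>i<4. 0 \<le> \<beta> i" and "(\<Sum>i<4. \<beta> i) = 1"
    and "x \<in> {0..1}"
    and "\<forall>i<4. (\<lambda>n. real (betacount i x n) / real n) \<longlonglongrightarrow> \<beta> i"
  shows "(\<beta> 1 * ln (6*lam + 1) + \<beta> 2 * ln (6*lam - 1) > 0 \<longrightarrow> x \<in> Iset lam)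
       \<and> (\<beta> 1 * ln (6*lam + 1) + \<beta> 2 * ln (6*lam - 1) \<le> 0 \<longrightarrow>
            hoelder_exp {0..1} (Flim lam) x = 1)"
proof -
  interpret Lam lam using assms(1,2) by unfold_locales
  have l1: "(\<lambda>n. real (betacount 1 x n) / real n) \<longlonglongrightarrow> \<beta> 1" using assms(6) by simp
  have l2: "(\<lambda>n. real (betacount 2 x n) / real n) \<longlonglongrightarrow> \<beta> 2" using assms(6) by simp
  have Eeq: "\<beta> 1 * L1 + \<beta> 2 * L2 = \<beta> 1 * ln (6*lam + 1) + \<beta> 2 * ln (6*lam - 1)"
    unfolding L1_def L2_def by simp
  show ?thesis
  proof (intro conjI impI)
    assume E: "\<beta> 1 * ln (6*lam + 1) + \<beta> 2 * ln (6*lam - 1) > 0"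
    then have E': "0 < \<beta> 1 * L1 + \<beta> 2 * L2" using Eeq by simp
    have nE: "x \<notin> Eset"
    proof
      assume "x \<in> Eset"
      then obtain N where N: "\<forall>n\<ge>N. udig n x = 0 \<or> udig n x = 3" unfolding Eset_def by auto
      obtain k where "k \<ge> N" "udig k x = 1 \<or> udig k x = 2" using digits12_exist[OF l1 l2, of N] E' by auto
      then show False using N by force
    qed
    have "filterlim (\<lambda>n. sv lam x n) at_top sequentially" by (rule sv_to_inf[OF l1 l2 E'])
    moreover have "(\<lambda>n. \<bar>slope lam n x\<bar>) = (\<lambda>n. sv lam x n)" using slope_eq[OF assms(5) nE] by auto
    ultimately show "x \<in> Iset lam" unfolding Iset_def using assms(5) nE by simp
  next
    assume E: "\<beta> 1 * ln (6*lam + 1) + \<beta> 2 * ln (6*lam - 1) \<le> 0"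
    then have E': "\<beta> 1 * L1 + \<beta> 2 * L2 \<le> 0" using Eeq by simp
    show "hoelder_exp {0..1} (Flim lam) x = 1" by (rule part_ii[OF assms(5) l1 l2 E'])
  qed
qed


end
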